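(* Let $f:M\to\mathbb{R}^3$ be an immersion with eq\"uiaffine transversal vector field $\xi$ and positive definite induced bilinear form $h$, and let $r_0$ be an isolated umbilical point. Let $\{X_1,X_2\}$ and $\{\tilde X_1,\tilde X_2\}$ be two smooth $h$-orthonormal frames near $r_0$, with associated vector fields $\mathcal{B}$ and $\tilde{\mathcal{B}}$. Then the order of $r_0$, and the property of $r_0$ being semi-homogeneous of degree $k$, are the same whether computed with $\mathcal{B}$ or with $\tilde{\mathcal{B}}$.
   Context: $D$ is the flat connection of $\mathbb{R}^3$; $h$ and the shape operator $B$ are defined by $D_Xf_*Y=f_*(\nabla_XY)+h(X,Y)\xi$ and $D_X\xi=-f_*(BX)+\tau(X)\xi$; eq\"uiaffine means $\tau=0$, in which case $B$ is $h$-self-adjoint. A point is umbilical if $B$ is a multiple of the identity there. For an $h$-orthonormal frame $\{X_1,X_2\}$ with matrix $(b_{ij})$ of $B$ (so $b_{12}=b_{21}$), set $\mathcal{B}=(b_{11}-b_{22})X_1+2b_{12}X_2$. The order of $r_0$ is the order of the first non-zero jet of $\mathcal{B}$ at $r_0$; $r_0$ is semi-homogeneous of degree $k$ if the $(k-1)$-jet of $\mathcal{B}$ at $r_0$ vanishes and $r_0$ is an isolated zero of the $k$-jet of $\mathcal{B}$. *)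

theory Defs
  imports "HOL-Analysis.Analysis"
begin

text \<open>Local model: the surface M is represented near the umbilical point by an open
chart domain U in real^2.  Tangent vectors are written in the coordinate basis.\<close>

fun pd :: "'n list \<Rightarrow> (real^'n::finite \<Rightarrow> 'b::real_normed_vector) \<Rightarrow> real^'n \<Rightarrow> 'b" where
  "pd [] g = g"
| "pd (i # is) g = (\<lambda>x. frechet_derivative (pd is g) (at x) (axis i 1))"

definition smooth_on :: "(real^'n::finite) set \<Rightarrow> (real^'n \<Rightarrow> 'b::real_normed_vector) \<Rightarrow> bool" where
  "smooth_on U g \<longleftrightarrow> open U \<and> (\<forall>is. \<forall>x\<in>U. pd is g differentiable (at x))"

text \<open>Differential f_* at p and second derivative D_v (f_* w) for constant coordinate fields.\<close>
definition dmap :: "(real^'n::finite \<Rightarrow> 'b::real_normed_vector) \<Rightarrow> real^'n \<Rightarrow> real^'n \<Rightarrow> 'b" where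
  "dmap g p v = frechet_derivative g (at p) v"

definition d2map :: "(real^'n::finite \<Rightarrow> 'b::real_normed_vector) \<Rightarrow> real^'n \<Rightarrow> real^'n \<Rightarrow> real^'n \<Rightarrow> 'b" where
  "d2map g p v w = frechet_derivative (\<lambda>q. dmap g q w) (at p) v"

definition jet :: "nat \<Rightarrow> (real^'n::finite \<Rightarrow> 'b::real_normed_vector) \<Rightarrow> real^'n \<Rightarrow> real^'n \<Rightarrow> 'b" where
  "jet k V r x = (\<Sum>m\<le>k. \<Sum>is\<in>{is::'n list. length is = m}.
       (inverse (fact m) * (\<Prod>i\<leftarrow>is. (x - r) $ i)) *\<^sub>R pd is V r)"

definition jet_order :: "(real^'n::finite \<Rightarrow> 'b::real_normed_vector) \<Rightarrow> real^'n \<Rightarrow> enat" where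
  "jet_order V r = (if \<exists>k. jet k V r \<noteq> (\<lambda>_. 0)
                    then enat (LEAST k. jet k V r \<noteq> (\<lambda>_. 0)) else \<infinity>)"

definition isolated_zero :: "(real^'n::finite \<Rightarrow> 'b::real_normed_vector) \<Rightarrow> real^'n \<Rightarrow> bool" where
  "isolated_zero P r \<longleftrightarrow> P r = 0 \<and> (\<exists>e>0. \<forall>x. 0 < dist x r \<and> dist x r < e \<longrightarrow> P x \<noteq> 0)"

definition semi_homogeneous :: "nat \<Rightarrow> (real^'n::finite \<Rightarrow> 'b::real_normed_vector) \<Rightarrow> real^'n \<Rightarrow> bool" where
  "semi_homogeneous k V r \<longleftrightarrow>
     (0 < k \<longrightarrow> jet (k - 1) V r = (\<lambda>_. 0)) \<and> isolated_zero (jet k V r) r"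

definition umbilical :: "(real^2 \<Rightarrow> real^2 \<Rightarrow> real^2) \<Rightarrow> real^2 \<Rightarrow> bool" where
  "umbilical B p \<longleftrightarrow> (\<exists>c. \<forall>v. B p v = c *\<^sub>R v)"

definition h_orthonormal_frame ::
  "(real^2 \<Rightarrow> real^2 \<Rightarrow> real^2 \<Rightarrow> real) \<Rightarrow> (real^2) set \<Rightarrow> (real^2 \<Rightarrow> real^2) \<Rightarrow> (real^2 \<Rightarrow> real^2) \<Rightarrow> bool" where
  "h_orthonormal_frame h V X1 X2 \<longleftrightarrow>
     (\<forall>p\<in>V. h p (X1 p) (X1 p) = 1 \<and> h p (X2 p) (X2 p) = 1 \<and> h p (X1 p) (X2 p) = 0)"

definition calB ::
  "(real^2 \<Rightarrow> real^2 \<Rightarrow> real^2 \<Rightarrow> real) \<Rightarrow> (real^2 \<Rightarrow> real^2 \<Rightarrow> real^2) \<Rightarrow> (real^2 \<Rightarrow> real^2) \<Rightarrow> (real^2 \<Rightarrow> real^2) \<Rightarrow> real^2 \<Rightarrow> real^2" where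
  "calB h B X1 X2 p =
     (h p (X1 p) (B p (X1 p)) - h p (X2 p) (B p (X2 p))) *\<^sub>R X1 p
     + (2 * h p (X1 p) (B p (X2 p))) *\<^sub>R X2 p"

end

theory Submission
  imports Defs
begin

lemma vec_expand: "(\<Sum>i\<in>UNIV. (x$i) *\<^sub>R axis i (1::real)) = (x::real^'n::finite)"
proof -
  have "(\<Sum>j\<in>UNIV. x $ j * (if i = j then 1 else 0)) = x $ i" for i
    by (simp add: if_distrib[of "(*) _"] cong: if_cong)
  then show ?thesis by (simp add: vec_eq_iff axis_def)
qed

lemma pd_append: "pd (is @ js) g = pd is (pd js g)"
  by (induction "is") auto

lemma fd_local:
  assumes "open S" "x \<in> S" "\<And>y. y \<in> S \<Longrightarrow> a y = b y"
  shows "frechet_derivative a (at x) = frechet_derivative b (at x)"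
proof -
  have "(a has_derivative D) (at x) \<longleftrightarrow> (b has_derivative D) (at x)" for D
    using has_derivative_transform_within_open[OF _ assms(1,2), of a D UNIV b]
      has_derivative_transform_within_open[OF _ assms(1,2), of b D UNIV a] assms(3) by metis
  then show ?thesis unfolding frechet_derivative_def by simp
qed

lemma pd_local:
  assumes "open S" "\<And>y. y \<in> S \<Longrightarrow> a y = b y" "x \<in> S"
  shows "pd is a x = pd is b x"
  using assms(3)
proof (induction "is" arbitrary: x)
  case Nil then show ?case using assms(2) by simp
next
  case (Cons i "is")
  have "frechet_derivative (pd is a) (at x) = frechet_derivative (pd is b) (at x)"
    by (rule fd_local[OF assms(1) Cons.prems]) (rule Cons.IH)
  then show ?case by simp
qed

lemma diff_local:
  assumes "open S" "x \<in> S" "\<And>y. y \<in> S \<Longrightarrow> a y = b y" "a differentiable (at x)"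
  shows "b differentiable (at x)"
  using assms has_derivative_transform_within_open unfolding differentiable_def by metis

lemma smooth_cong:
  assumes "smooth_on S a" "\<And>y. y \<in> S \<Longrightarrow> a y = b y"
  shows "smooth_on S b"
  unfolding smooth_on_def
proof (intro conjI allI ballI)
  show "open S" using assms(1) smooth_on_def by blast
  fix "is" x assume x: "x \<in> S"
  have "pd is a differentiable (at x)" using assms(1) x smooth_on_def by blast
  moreover have "\<And>y. y \<in> S \<Longrightarrow> pd is a y = pd is b y"
    using pd_local[OF \<open>open S\<close>, of a b] assms(2) by blast
  ultimately show "pd is b differentiable (at x)" using diff_local[OF \<open>open S\<close> x] by blast
qed

lemma smooth_mono: "smooth_on S a \<Longrightarrow> open T \<Longrightarrow> T \<subseteq> S \<Longrightarrow> smooth_on T a"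
  unfolding smooth_on_def by blast

lemma smooth_open: "smooth_on S a \<Longrightarrow> open S"
  unfolding smooth_on_def by blast

lemma smooth_pd: "smooth_on S g \<Longrightarrow> smooth_on S (pd js g)"
  unfolding smooth_on_def by (metis pd_append)

lemma smooth_diff: "smooth_on S g \<Longrightarrow> x \<in> S \<Longrightarrow> g differentiable (at x)"
  unfolding smooth_on_def by (metis pd.simps(1))

lemma smooth_pd_diff: "smooth_on S g \<Longrightarrow> x \<in> S \<Longrightarrow> pd is g differentiable (at x)"
  unfolding smooth_on_def by blast

lemma smooth_cont: "smooth_on S g \<Longrightarrow> x \<in> S \<Longrightarrow> isCont g x"
  using smooth_diff differentiable_imp_continuous_within by blast

lemma pd1: "pd [i] g x = frechet_derivative g (at x) (axis i 1)"
  by simp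

lemma fd_expand:
  fixes g :: "real^'n::finite \<Rightarrow> 'b::real_normed_vector"
  assumes "g differentiable (at x)"
  shows "frechet_derivative g (at x) v = (\<Sum>i\<in>UNIV. (v$i) *\<^sub>R pd [i] g x)"
proof -
  have l: "linear (frechet_derivative g (at x))" by (rule linear_frechet_derivative[OF assms])
  have "frechet_derivative g (at x) v = frechet_derivative g (at x) (\<Sum>i\<in>UNIV. (v$i) *\<^sub>R axis i 1)"
    by (simp add: vec_expand)
  also have "... = (\<Sum>i\<in>UNIV. (v$i) *\<^sub>R frechet_derivative g (at x) (axis i 1))"
    by (simp add: linear_sum[OF l] linear_scale[OF l])
  finally show ?thesis by simp
qed

lemma smooth_coind:
  assumes "open S" "P g"
    and step: "\<And>g. P g \<Longrightarrow> (\<forall>x\<in>S. g differentiable (at x)) \<and> (\<forall>j. \<exists>g'. P g' \<and> (\<forall>x\<in>S. pd [j] g x = g' x))"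
  shows "smooth_on S g"
proof -
  have "\<forall>g. P g \<longrightarrow> (\<forall>x\<in>S. pd is g differentiable (at x))" for "is"
  proof (induction "is" rule: rev_induct)
    case Nil then show ?case using step by simp
  next
    case (snoc j "is")
    show ?case
    proof (intro allI impI ballI)
      fix g x assume "P g" "x \<in> S"
      obtain g' where g': "P g'" "\<forall>x\<in>S. pd [j] g x = g' x" using step[OF \<open>P g\<close>] by blast
      have eq: "\<And>y. y \<in> S \<Longrightarrow> pd is g' y = pd (is @ [j]) g y"
        using pd_local[OF assms(1), of g' "pd [j] g"] g'(2) by (simp add: pd_append)
      show "pd (is @ [j]) g differentiable (at x)"
        using diff_local[OF assms(1) \<open>x \<in> S\<close>, of "pd is g'" "pd (is @ [j]) g"] eq snoc.IH g'(1) \<open>x \<in> S\<close> by blast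
    qed
  qed
  then show ?thesis using assms(1,2) unfolding smooth_on_def by blast
qed

lemma pd_add:
  assumes "open S"
    and "\<And>js y. length js < length is \<Longrightarrow> y \<in> S \<Longrightarrow> pd js f differentiable (at y) \<and> pd js g differentiable (at y)"
  shows "\<forall>x\<in>S. pd is (\<lambda>y. f y + g y) x = pd is f x + pd is g x"
  using assms(2)
proof (induction "is")
  case Nil then show ?case by simp
next
  case (Cons i "is")
  have IH: "\<And>y. y\<in>S \<Longrightarrow> pd is (\<lambda>y. f y + g y) y = (\<lambda>y. pd is f y + pd is g y) y"
    using Cons.IH Cons.prems by force
  show ?case
  proof
    fix x assume x: "x \<in> S"
    have df: "pd is f differentiable (at x)" "pd is g differentiable (at x)" using Cons.prems[of "is" x] x by auto
    have "frechet_derivative (pd is (\<lambda>y. f y + g y)) (at x) = frechet_derivative (\<lambda>y. pd is f y + pd is g y) (at x)"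
      by (rule fd_local[OF assms(1) x IH])
    also have "... = (\<lambda>h. frechet_derivative (pd is f) (at x) h + frechet_derivative (pd is g) (at x) h)"
      by (rule frechet_derivative_at[symmetric]) (intro has_derivative_add frechet_derivative_works[THEN iffD1] df)
    finally show "pd (i # is) (\<lambda>y. f y + g y) x = pd (i # is) f x + pd (i # is) g x" by simp
  qed
qed

lemma smooth_add:
  assumes "smooth_on S f" "smooth_on S g"
  shows "smooth_on S (\<lambda>y. f y + g y)"
  unfolding smooth_on_def
proof (intro conjI allI ballI)
  have S: "open S" using assms smooth_open by blast
  then show "open S" .
  fix "is" x assume x: "x \<in> S"
  have eq: "\<forall>x\<in>S. pd is (\<lambda>y. f y + g y) x = pd is f x + pd is g x"
    by (rule pd_add[OF S]) (use assms smooth_pd_diff in blast)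
  have "(\<lambda>y. pd is f y + pd is g y) differentiable (at x)"
    using assms x smooth_pd_diff by (intro differentiable_add) auto
  then show "pd is (\<lambda>y. f y + g y) differentiable (at x)"
    using diff_local[OF S x, of "\<lambda>y. pd is f y + pd is g y"] eq by auto
qed

lemma pd_linear:
  assumes "bounded_linear L" "open S" "\<And>is x. x \<in> S \<Longrightarrow> pd is F differentiable (at x)"
  shows "\<forall>x\<in>S. pd is (\<lambda>y. L (F y)) x = L (pd is F x)"
proof (induction "is")
  case Nil then show ?case by simp
next
  case (Cons i "is")
  show ?case
  proof
    fix x assume x: "x \<in> S"
    have "frechet_derivative (pd is (\<lambda>y. L (F y))) (at x) = frechet_derivative (\<lambda>y. L (pd is F y)) (at x)"
      by (rule fd_local[OF assms(2) x]) (use Cons.IH in blast)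
    also have "... = (\<lambda>h. L (frechet_derivative (pd is F) (at x) h))"
      by (rule frechet_derivative_at[symmetric])
        (intro bounded_linear.has_derivative[OF assms(1)] frechet_derivative_works[THEN iffD1] assms(3) x)
    finally show "pd (i # is) (\<lambda>y. L (F y)) x = L (pd (i # is) F x)" by simp
  qed
qed

lemma smooth_linear:
  assumes "bounded_linear L" "smooth_on S F"
  shows "smooth_on S (\<lambda>y. L (F y))"
  unfolding smooth_on_def
proof (intro conjI allI ballI)
  have S: "open S" using assms smooth_open by blast
  then show "open S" .
  fix "is" x assume x: "x \<in> S"
  have eq: "\<forall>x\<in>S. pd is (\<lambda>y. L (F y)) x = L (pd is F x)"
    by (rule pd_linear[OF assms(1) S]) (use assms smooth_pd_diff in blast)
  have "(\<lambda>y. L (pd is F y)) differentiable (at x)"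
    using assms x smooth_pd_diff bounded_linear.has_derivative[OF assms(1)] unfolding differentiable_def
    by blast
  then show "pd is (\<lambda>y. L (F y)) differentiable (at x)"
    using diff_local[OF S x, of "\<lambda>y. L (pd is F y)"] eq by auto
qed

lemma smooth_const:
  fixes S :: "(real^'n::finite) set" and c :: "'b::real_normed_vector"
  assumes "open S" shows "smooth_on S (\<lambda>y. c)"
proof -
  let ?P = "\<lambda>q :: real^'n \<Rightarrow> 'b. \<exists>c. \<forall>x\<in>S. q x = c"
  show ?thesis
  proof (rule smooth_coind[OF assms, of ?P])
    show "?P (\<lambda>y. c)" by blast
  next
    fix q assume "?P q"
    then obtain c where c: "\<forall>x\<in>S. q x = c" by blast
    have hd: "(q has_derivative (\<lambda>h. 0)) (at x)" if "x \<in> S" for x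
    proof (rule has_derivative_transform_within_open[OF _ assms that])
      show "((\<lambda>_. c) has_derivative (\<lambda>h. 0)) (at x)" by simp
    next
      fix y assume "y \<in> S" then show "c = q y" using c by simp
    qed
    show "(\<forall>x\<in>S. q differentiable (at x)) \<and> (\<forall>j. \<exists>g'. ?P g' \<and> (\<forall>x\<in>S. pd [j] q x = g' x))"
    proof (intro conjI allI)
      show "\<forall>x\<in>S. q differentiable (at x)" using hd differentiable_def by blast
      fix j
      show "\<exists>g'. ?P g' \<and> (\<forall>x\<in>S. pd [j] q x = g' x)"
        by (rule exI[of _ "\<lambda>x. 0"]) (auto simp: frechet_derivative_at[OF hd, symmetric])
    qed
  qed
qed

lemma smooth_sum:
  assumes "open S" "finite I" "\<And>i. i \<in> I \<Longrightarrow> smooth_on S (F i)"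
  shows "smooth_on S (\<lambda>y. \<Sum>i\<in>I. F i y)"
  using assms(2,3)
proof (induction I rule: finite_induct)
  case empty then show ?case using smooth_const[OF assms(1)] by simp
next
  case (insert a I)
  then show ?case using smooth_add[of S "F a" "\<lambda>y. \<Sum>i\<in>I. F i y"] by simp
qed

lemma fd_at_eq:
  assumes "(f has_derivative D) (at x)"
  shows "pd [j] f x = D (axis j 1)"
  using frechet_derivative_at[OF assms] by simp

lemma pd1_bilinear:
  assumes bb: "bounded_bilinear bp" and "f differentiable (at x)" "g differentiable (at x)"
  shows "pd [j] (\<lambda>y. bp (f y) (g y)) x = bp (f x) (pd [j] g x) + bp (pd [j] f x) (g x)"
proof -
  have "((\<lambda>y. bp (f y) (g y)) has_derivative (\<lambda>h. bp (f x) (frechet_derivative g (at x) h) + bp (frechet_derivative f (at x) h) (g x))) (at x)"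
    by (rule bounded_bilinear.FDERIV[OF bb]) (use assms frechet_derivative_works in blast)+
  from fd_at_eq[OF this] show ?thesis by simp
qed

lemma diff_bilinear:
  assumes bb: "bounded_bilinear bp" and "f differentiable (at x)" "g differentiable (at x)"
  shows "(\<lambda>y. bp (f y) (g y)) differentiable (at x)"
  using bounded_bilinear.FDERIV[OF bb] assms(2,3) unfolding differentiable_def by blast

lemma smooth_bilinear:
  fixes S :: "(real^'n::finite) set" and f :: "real^'n \<Rightarrow> 'a::real_normed_vector" and g :: "real^'n \<Rightarrow> 'b::real_normed_vector"
    and bp :: "'a \<Rightarrow> 'b \<Rightarrow> 'c::real_normed_vector"
  assumes bb: "bounded_bilinear bp" and f0: "smooth_on S f" and g0: "smooth_on S g"
  shows "smooth_on S (\<lambda>y. bp (f y) (g y))"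
proof -
  have S: "open S" using f0 smooth_open by blast
  have main: "\<forall>(f::real^'n \<Rightarrow> 'a) (g::real^'n \<Rightarrow> 'b). smooth_on S f \<longrightarrow> smooth_on S g \<longrightarrow> (\<forall>is::'n list. length is \<le> n \<longrightarrow> (\<forall>x\<in>S. pd is (\<lambda>y. bp (f y) (g y)) differentiable (at x)))" for n
  proof (induction n)
    case 0
    show ?case
    proof (intro allI impI ballI)
      fix f :: "real^'n \<Rightarrow> 'a" and g :: "real^'n \<Rightarrow> 'b" and "is" :: "'n list" and x
      assume f: "smooth_on S f" and g: "smooth_on S g" and "length is \<le> 0" and x: "x \<in> S"
      then have "is = []" by simp
      then show "pd is (\<lambda>y. bp (f y) (g y)) differentiable (at x)"
        using diff_bilinear[OF bb smooth_diff[OF f x] smooth_diff[OF g x]] by simp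
    qed
  next
    case (Suc n)
    show ?case
    proof (intro allI impI ballI)
      fix f :: "real^'n \<Rightarrow> 'a" and g :: "real^'n \<Rightarrow> 'b" and "is" :: "'n list" and x assume f: "smooth_on S f" and g: "smooth_on S g" and len: "length is \<le> Suc n" and x: "x \<in> S"
      show "pd is (\<lambda>y. bp (f y) (g y)) differentiable (at x)"
      proof (cases "length is \<le> n")
        case True then show ?thesis using Suc.IH f g x by blast
      next
        case False
        then have "length is = Suc n" using len by simp
        then obtain j js where his: "is = js @ [j]" and ljs: "length js = n" by (auto simp: length_Suc_conv_rev)
        define F1 where "F1 = (\<lambda>y. bp (f y) (pd [j] g y))"
        define F2 where "F2 = (\<lambda>y. bp (pd [j] f y) (g y))"
        have IH1: "\<And>ks y. length ks \<le> n \<Longrightarrow> y \<in> S \<Longrightarrow> pd ks F1 differentiable (at y)"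
          using Suc.IH f smooth_pd[OF g] unfolding F1_def by blast
        have IH2: "\<And>ks y. length ks \<le> n \<Longrightarrow> y \<in> S \<Longrightarrow> pd ks F2 differentiable (at y)"
          using Suc.IH g smooth_pd[OF f] unfolding F2_def by blast
        have e1: "pd [j] (\<lambda>y. bp (f y) (g y)) y = F1 y + F2 y" if "y \<in> S" for y
          unfolding F1_def F2_def by (rule pd1_bilinear[OF bb smooth_diff[OF f that] smooth_diff[OF g that]])
        have e2: "\<forall>y\<in>S. pd js (\<lambda>y. F1 y + F2 y) y = pd js F1 y + pd js F2 y"
          by (rule pd_add[OF S]) (use IH1 IH2 ljs in auto)
        have e3: "\<And>y. y \<in> S \<Longrightarrow> pd js (\<lambda>y. F1 y + F2 y) y = pd is (\<lambda>y. bp (f y) (g y)) y"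
          using pd_local[OF S, of "\<lambda>y. F1 y + F2 y" "pd [j] (\<lambda>y. bp (f y) (g y))"] e1
          by (simp add: his pd_append)
        have "(\<lambda>y. pd js F1 y + pd js F2 y) differentiable (at x)"
          using IH1 IH2 ljs x by (intro differentiable_add) auto
        then show ?thesis using diff_local[OF S x, of "\<lambda>y. pd js F1 y + pd js F2 y"] e2 e3 by auto
      qed
    qed
  qed
  show ?thesis unfolding smooth_on_def
  proof (intro conjI allI ballI)
    show "open S" by (rule S)
    fix "is" :: "'n list" and x assume "x \<in> S"
    then show "pd is (\<lambda>y. bp (f y) (g y)) differentiable (at x)"
      using main[of "length is"] f0 g0 by blast
  qed
qed

lemma smooth_mult:
  fixes f g :: "real^'n::finite \<Rightarrow> real"
  shows "smooth_on S f \<Longrightarrow> smooth_on S g \<Longrightarrow> smooth_on S (\<lambda>y. f y * g y)"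
  by (rule smooth_bilinear[OF bounded_bilinear_mult])

lemma smooth_scaleR:
  fixes f :: "real^'n::finite \<Rightarrow> real"
  shows "smooth_on S f \<Longrightarrow> smooth_on S g \<Longrightarrow> smooth_on S (\<lambda>y. f y *\<^sub>R g y)"
  by (rule smooth_bilinear[OF bounded_bilinear_scaleR])

lemma smooth_inner:
  shows "smooth_on S f \<Longrightarrow> smooth_on S g \<Longrightarrow> smooth_on S (\<lambda>y. inner (f y) (g y))"
  by (rule smooth_bilinear[OF bounded_bilinear_inner])

lemma bounded_bilinear_cross: "bounded_bilinear cross3"
proof
  fix a a' b b' :: "real^3" and r :: real
  show "cross3 (a + a') b = cross3 a b + cross3 a' b" by (rule cross_add_left)
  show "cross3 a (b + b') = cross3 a b + cross3 a b'" by (rule cross_add_right)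
  show "cross3 (r *\<^sub>R a) b = r *\<^sub>R (cross3 a b)" by (rule cross_mult_left)
  show "cross3 a (r *\<^sub>R b) = r *\<^sub>R (cross3 a b)" by (rule cross_mult_right)
next
  have "norm (cross3 x y) \<le> norm x * norm y * 1" for x y :: "real^3"
  proof -
    have "(norm (cross3 x y))\<^sup>2 \<le> (norm x * norm y)\<^sup>2" using norm_cross_dot[of x y]
      zero_le_power2[of "inner x y"] by linarith
    then show ?thesis using power2_le_imp_le[of "norm (cross3 x y)" "norm x * norm y"] by simp
  qed
  then show "\<exists>K. \<forall>a b. norm (cross3 a b) \<le> norm a * norm b * K" by blast
qed

lemma smooth_cross:
  shows "smooth_on S f \<Longrightarrow> smooth_on S g \<Longrightarrow> smooth_on S (\<lambda>y. cross3 (f y) (g y))"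
  by (rule smooth_bilinear[OF bounded_bilinear_cross])

lemma smooth_nth:
  "smooth_on S F \<Longrightarrow> smooth_on S (\<lambda>y. F y $ i)"
  by (rule smooth_linear[OF bounded_linear_vec_nth])

lemma pd_nth:
  assumes "smooth_on S F" "x \<in> S"
  shows "pd is (\<lambda>y. F y $ i) x = pd is F x $ i"
  using pd_linear[OF bounded_linear_vec_nth smooth_open[OF assms(1)], of F "is"] assms smooth_pd_diff
  by blast

lemma smooth_vecI:
  fixes F :: "real^'n::finite \<Rightarrow> real^'m::finite"
  assumes "open S" "\<And>i. smooth_on S (\<lambda>y. F y $ i)"
  shows "smooth_on S F"
proof -
  have "smooth_on S (\<lambda>y. \<Sum>i\<in>UNIV. (F y $ i) *\<^sub>R axis i (1::real))"
    by (intro smooth_sum[OF assms(1)]) (auto intro: smooth_scaleR assms(2) smooth_const[OF assms(1)])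
  then show ?thesis by (simp add: vec_expand)
qed

lemma line_deriv_axis:
  fixes g :: "real^'n::finite \<Rightarrow> real"
  assumes "g differentiable (at (a + s *\<^sub>R axis i 1))"
  shows "((\<lambda>s. g (a + s *\<^sub>R axis i 1)) has_real_derivative pd [i] g (a + s *\<^sub>R axis i 1)) (at s)"
proof -
  have l: "((\<lambda>s. a + s *\<^sub>R axis i (1::real)) has_derivative (\<lambda>s. s *\<^sub>R axis i 1)) (at s)"
    by (auto intro!: derivative_eq_intros)
  have "((\<lambda>s. g (a + s *\<^sub>R axis i 1)) has_derivative (\<lambda>h. frechet_derivative g (at (a + s *\<^sub>R axis i 1)) (h *\<^sub>R axis i 1))) (at s)"
    by (rule has_derivative_compose[OF l]) (use assms frechet_derivative_works in blast)
  moreover have "(\<lambda>h. frechet_derivative g (at (a + s *\<^sub>R axis i 1)) (h *\<^sub>R axis i 1)) = (*) (pd [i] g (a + s *\<^sub>R axis i 1))"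
  proof
    fix h
    have "frechet_derivative g (at (a + s *\<^sub>R axis i 1)) (h *\<^sub>R axis i 1) = h *\<^sub>R frechet_derivative g (at (a + s *\<^sub>R axis i 1)) (axis i 1)"
      by (rule linear_scale[OF linear_frechet_derivative[OF assms]])
    then show "frechet_derivative g (at (a + s *\<^sub>R axis i 1)) (h *\<^sub>R axis i 1) = pd [i] g (a + s *\<^sub>R axis i 1) * h"
      by simp
  qed
  ultimately show ?thesis unfolding has_field_derivative_def by simp
qed

lemma line_deriv:
  assumes "g differentiable (at (a + s *\<^sub>R u))"
  shows "((\<lambda>s. g (a + s *\<^sub>R u)) has_vector_derivative frechet_derivative g (at (a + s *\<^sub>R u)) u) (at s)"
proof -
  have l: "((\<lambda>s. a + s *\<^sub>R u) has_derivative (\<lambda>s. s *\<^sub>R u)) (at s)"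
    by (auto intro!: derivative_eq_intros)
  have "((\<lambda>s. g (a + s *\<^sub>R u)) has_derivative (\<lambda>h. frechet_derivative g (at (a + s *\<^sub>R u)) (h *\<^sub>R u))) (at s)"
    by (rule has_derivative_compose[OF l]) (use assms frechet_derivative_works in blast)
  moreover have "(\<lambda>h. frechet_derivative g (at (a + s *\<^sub>R u)) (h *\<^sub>R u)) = (\<lambda>h. h *\<^sub>R frechet_derivative g (at (a + s *\<^sub>R u)) u)"
    using linear_scale[OF linear_frechet_derivative[OF assms]] by auto
  ultimately show ?thesis unfolding has_vector_derivative_def by simp
qed

lemma smooth_inverse:
  fixes g :: "real^'n::finite \<Rightarrow> real"
  assumes g: "smooth_on S g" and nz: "\<And>x. x \<in> S \<Longrightarrow> g x \<noteq> 0"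
  shows "smooth_on S (\<lambda>x. inverse (g x))"
proof -
  have S: "open S" using g smooth_open by blast
  let ?P = "\<lambda>q :: real^'n \<Rightarrow> real. \<exists>a n. smooth_on S a \<and> (\<forall>x\<in>S. q x = a x * inverse (g x) ^ n)"
  show ?thesis
  proof (rule smooth_coind[OF S, of ?P])
    show "?P (\<lambda>x. inverse (g x))"
      by (rule exI[of _ "\<lambda>x. 1"], rule exI[of _ 1]) (simp add: smooth_const[OF S])
  next
    fix q assume "?P q"
    then obtain a n where a: "smooth_on S a" and q: "\<forall>x\<in>S. q x = a x * inverse (g x) ^ n" by blast
    have hd: "(q has_derivative (\<lambda>h. frechet_derivative a (at x) h * inverse (g x) ^ n
         + a x * (of_nat n * (- (inverse (g x) * frechet_derivative g (at x) h * inverse (g x))) * inverse (g x) ^ (n - 1)))) (at x)"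
      if x: "x \<in> S" for x
    proof (rule has_derivative_transform_within_open[OF _ S x])
      show "((\<lambda>x. a x * inverse (g x) ^ n) has_derivative (\<lambda>h. frechet_derivative a (at x) h * inverse (g x) ^ n
         + a x * (of_nat n * (- (inverse (g x) * frechet_derivative g (at x) h * inverse (g x))) * inverse (g x) ^ (n - 1)))) (at x)"
        using smooth_diff[OF a x] smooth_diff[OF g x] nz[OF x]
        by (auto intro!: derivative_eq_intros simp: frechet_derivative_works[symmetric])
    next
      fix y assume "y \<in> S" then show "a y * inverse (g y) ^ n = q y" using q by simp
    qed
    show "(\<forall>x\<in>S. q differentiable (at x)) \<and> (\<forall>j. \<exists>g'. ?P g' \<and> (\<forall>x\<in>S. pd [j] q x = g' x))"
    proof (intro conjI allI)
      show "\<forall>x\<in>S. q differentiable (at x)" using hd differentiable_def by blast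
      fix j
      show "\<exists>g'. ?P g' \<and> (\<forall>x\<in>S. pd [j] q x = g' x)"
      proof (rule exI, rule conjI)
        show "?P (\<lambda>x. (pd [j] a x * g x - of_nat n * a x * pd [j] g x) * inverse (g x) ^ (Suc n))"
        proof (rule exI[of _ "\<lambda>x. pd [j] a x * g x - of_nat n * a x * pd [j] g x"], rule exI[of _ "Suc n"], rule conjI)
          have "smooth_on S (\<lambda>x. pd [j] a x * g x + (- of_nat n * a x) * pd [j] g x)"
            by (intro smooth_add smooth_mult smooth_pd a g smooth_const S)
          then show "smooth_on S (\<lambda>x. pd [j] a x * g x - of_nat n * a x * pd [j] g x)"
            by (rule smooth_cong) simp
        qed simp
        show "\<forall>x\<in>S. pd [j] q x = (pd [j] a x * g x - of_nat n * a x * pd [j] g x) * inverse (g x) ^ (Suc n)"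
        proof
          fix x assume x: "x \<in> S"
          have gx: "g x \<noteq> 0" using nz[OF x] .
          have "pd [j] q x = pd [j] a x * inverse (g x) ^ n
            + a x * (of_nat n * (- (inverse (g x) * pd [j] g x * inverse (g x))) * inverse (g x) ^ (n - 1))"
            using fd_at_eq[OF hd[OF x]] by simp
          also have "... = (pd [j] a x * g x - of_nat n * a x * pd [j] g x) * inverse (g x) ^ (Suc n)"
          proof (cases n)
            case 0 then show ?thesis using gx by (simp add: field_simps)
          next
            case (Suc m) then show ?thesis using gx by (simp add: field_simps)
          qed
          finally show "pd [j] q x = (pd [j] a x * g x - of_nat n * a x * pd [j] g x) * inverse (g x) ^ (Suc n)" .
        qed
      qed
    qed
  qed
qed


lemma schwarz_aux:
  fixes g :: "real^'n::finite \<Rightarrow> real"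
  assumes sm: "smooth_on S g" and ball: "ball x r \<subseteq> S" and t: "0 < t" "2 * t < r"
  shows "\<exists>y. dist y x \<le> 2 * t \<and> g (x + t *\<^sub>R axis i 1 + t *\<^sub>R axis j 1) - g (x + t *\<^sub>R axis i 1) - g (x + t *\<^sub>R axis j 1) + g x = t^2 * pd [j, i] g y"
proof -
  define e where "e = axis i (1::real)"
  define d where "d = axis j (1::real)"
  have ne: "norm e = 1" "norm d = 1" unfolding e_def d_def by (simp_all add: norm_axis_1)
  have inS: "x + s *\<^sub>R e + s' *\<^sub>R d \<in> S" if "0 \<le> s" "s \<le> t" "0 \<le> s'" "s' \<le> t" for s s'
  proof -
    have "norm (s *\<^sub>R e + s' *\<^sub>R d) \<le> norm (s *\<^sub>R e) + norm (s' *\<^sub>R d)" by (rule norm_triangle_ineq)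
    also have "... = s + s'" using that ne by simp
    finally have "norm (s *\<^sub>R e + s' *\<^sub>R d) < r" using that t by linarith
    then have "dist (x + (s *\<^sub>R e + s' *\<^sub>R d)) x < r" by (simp add: dist_norm)
    then have "x + (s *\<^sub>R e + s' *\<^sub>R d) \<in> ball x r" by (simp add: dist_commute)
    then show ?thesis using ball by (simp add: add.assoc subset_iff)
  qed
  define \<phi> where "\<phi> s = g (x + t *\<^sub>R d + s *\<^sub>R e) - g (x + s *\<^sub>R e)" for s
  have d\<phi>: "(\<phi> has_real_derivative (pd [i] g (x + t *\<^sub>R d + s *\<^sub>R e) - pd [i] g (x + s *\<^sub>R e))) (at s)"
    if "0 \<le> s" "s \<le> t" for s
  proof -
    have p1: "x + t *\<^sub>R d + s *\<^sub>R e \<in> S" using inS[of s t] that t by (simp add: algebra_simps)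
    have p2: "x + s *\<^sub>R e \<in> S" using inS[of s 0] that t by simp
    show ?thesis unfolding \<phi>_def e_def
      by (intro DERIV_diff line_deriv_axis smooth_diff[OF sm] p1[unfolded e_def] p2[unfolded e_def])
  qed
  obtain \<sigma> where \<sigma>: "0 < \<sigma>" "\<sigma> < t"
    "\<phi> t - \<phi> 0 = (t - 0) * (pd [i] g (x + t *\<^sub>R d + \<sigma> *\<^sub>R e) - pd [i] g (x + \<sigma> *\<^sub>R e))"
    using MVT2[of 0 t \<phi> "\<lambda>s. pd [i] g (x + t *\<^sub>R d + s *\<^sub>R e) - pd [i] g (x + s *\<^sub>R e)"] d\<phi> t by auto
  define \<psi> where "\<psi> s = pd [i] g (x + \<sigma> *\<^sub>R e + s *\<^sub>R d)" for s
  have d\<psi>: "(\<psi> has_real_derivative pd [j, i] g (x + \<sigma> *\<^sub>R e + s *\<^sub>R d)) (at s)"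
    if "0 \<le> s" "s \<le> t" for s
  proof -
    have p1: "x + \<sigma> *\<^sub>R e + s *\<^sub>R d \<in> S" using inS[of \<sigma> s] that \<sigma> by simp
    have "(\<psi> has_real_derivative pd [j] (pd [i] g) (x + \<sigma> *\<^sub>R e + s *\<^sub>R d)) (at s)"
      unfolding \<psi>_def d_def
      by (intro line_deriv_axis smooth_diff[OF smooth_pd[OF sm]] p1[unfolded d_def])
    then show ?thesis by simp
  qed
  obtain \<tau> where \<tau>: "0 < \<tau>" "\<tau> < t"
    "\<psi> t - \<psi> 0 = (t - 0) * pd [j, i] g (x + \<sigma> *\<^sub>R e + \<tau> *\<^sub>R d)"
    using MVT2[of 0 t \<psi> "\<lambda>s. pd [j, i] g (x + \<sigma> *\<^sub>R e + s *\<^sub>R d)"] d\<psi> t by auto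
  define y where "y = x + \<sigma> *\<^sub>R e + \<tau> *\<^sub>R d"
  have "dist y x = norm (\<sigma> *\<^sub>R e + \<tau> *\<^sub>R d)" unfolding y_def dist_norm by (simp add: algebra_simps)
  also have "... \<le> norm (\<sigma> *\<^sub>R e) + norm (\<tau> *\<^sub>R d)" by (rule norm_triangle_ineq)
  also have "... \<le> 2 * t" using ne \<sigma> \<tau> by simp
  finally have dy: "dist y x \<le> 2 * t" .
  have "g (x + t *\<^sub>R e + t *\<^sub>R d) - g (x + t *\<^sub>R e) - g (x + t *\<^sub>R d) + g x = \<phi> t - \<phi> 0"
    unfolding \<phi>_def by (simp add: algebra_simps)
  also have "... = t * (\<psi> t - \<psi> 0)" using \<sigma>(3) unfolding \<psi>_def by (simp add: algebra_simps)
  also have "... = t^2 * pd [j, i] g y" using \<tau>(3) unfolding y_def by (simp add: power2_eq_square)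
  finally show ?thesis using dy unfolding e_def d_def by blast
qed

lemma schwarz_real:
  fixes g :: "real^'n::finite \<Rightarrow> real"
  assumes sm: "smooth_on S g" and x: "x \<in> S"
  shows "pd [i, j] g x = pd [j, i] g x"
proof -
  have S: "open S" using sm smooth_open by blast
  obtain r where r: "r > 0" "ball x r \<subseteq> S" using S x open_contains_ball by blast
  have c1: "isCont (pd [j, i] g) x" and c2: "isCont (pd [i, j] g) x"
    using smooth_cont[OF smooth_pd[OF sm] x] by blast+
  show ?thesis
  proof (rule ccontr)
    assume ne: "pd [i, j] g x \<noteq> pd [j, i] g x"
    define \<epsilon> where "\<epsilon> = \<bar>pd [i, j] g x - pd [j, i] g x\<bar> / 2"
    have e: "\<epsilon> > 0" using ne unfolding \<epsilon>_def by simp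
    obtain d1 where d1: "d1 > 0" "\<And>y. dist y x < d1 \<Longrightarrow> dist (pd [j, i] g y) (pd [j, i] g x) < \<epsilon>"
      using c1 e unfolding continuous_at_eps_delta by blast
    obtain d2 where d2: "d2 > 0" "\<And>y. dist y x < d2 \<Longrightarrow> dist (pd [i, j] g y) (pd [i, j] g x) < \<epsilon>"
      using c2 e unfolding continuous_at_eps_delta by blast
    define t where "t = min r (min d1 d2) / 4"
    have t: "0 < t" "2 * t < r" "2 * t < d1" "2 * t < d2" using r d1 d2 unfolding t_def by auto
    obtain y where y: "dist y x \<le> 2 * t"
      "g (x + t *\<^sub>R axis i 1 + t *\<^sub>R axis j 1) - g (x + t *\<^sub>R axis i 1) - g (x + t *\<^sub>R axis j 1) + g x = t^2 * pd [j, i] g y"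
      using schwarz_aux[OF sm r(2) t(1,2), of i j] by blast
    obtain z where z: "dist z x \<le> 2 * t"
      "g (x + t *\<^sub>R axis j 1 + t *\<^sub>R axis i 1) - g (x + t *\<^sub>R axis j 1) - g (x + t *\<^sub>R axis i 1) + g x = t^2 * pd [i, j] g z"
      using schwarz_aux[OF sm r(2) t(1,2), of j i] by blast
    have "t^2 * pd [j, i] g y = t^2 * pd [i, j] g z" using y(2) z(2) by (simp add: algebra_simps)
    then have yz: "pd [j, i] g y = pd [i, j] g z" using t(1) by simp
    have "dist (pd [j, i] g y) (pd [j, i] g x) < \<epsilon>" using d1(2) y(1) t by simp
    moreover have "dist (pd [i, j] g z) (pd [i, j] g x) < \<epsilon>" using d2(2) z(1) t by simp
    ultimately have "\<bar>pd [i, j] g x - pd [j, i] g x\<bar> < 2 * \<epsilon>" using yz unfolding dist_real_def by linarith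
    then show False unfolding \<epsilon>_def by simp
  qed
qed

lemma schwarz:
  fixes F :: "real^'n::finite \<Rightarrow> real^'m::finite"
  assumes sm: "smooth_on S F" and x: "x \<in> S"
  shows "pd [i, j] F x = pd [j, i] F x"
proof -
  have "pd [i, j] F x $ k = pd [j, i] F x $ k" for k
    using schwarz_real[OF smooth_nth[OF sm] x, of i j k] pd_nth[OF sm x] by metis
  then show ?thesis by (simp add: vec_eq_iff)
qed

definition cB :: "(real^2 \<Rightarrow> real^2 \<Rightarrow> real) \<Rightarrow> (real^2 \<Rightarrow> real^2) \<Rightarrow> real^2 \<Rightarrow> real^2 \<Rightarrow> real^2" where
  "cB H S X1 X2 = (H X1 (S X1) - H X2 (S X2)) *\<^sub>R X1 + (2 * H X1 (S X2)) *\<^sub>R X2"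

lemma det2_identity:
  fixes a b c :: "real^2"
  shows "(b$1*c$2 - b$2*c$1) *\<^sub>R a - (a$1*c$2 - a$2*c$1) *\<^sub>R b + (a$1*b$2 - a$2*b$1) *\<^sub>R c = 0"
  by (simp add: vec_eq_iff forall_2 algebra_simps)

lemma frame_expand:
  fixes H :: "real^2 \<Rightarrow> real^2 \<Rightarrow> real"
  assumes bl: "bilinear H" and sym: "\<And>v w. H v w = H w v" and pos: "\<And>v. v \<noteq> 0 \<Longrightarrow> H v v > 0"
    and on: "H X1 X1 = 1" "H X2 X2 = 1" "H X1 X2 = 0"
  shows "v = H v X1 *\<^sub>R X1 + H v X2 *\<^sub>R X2"
proof -
  define dt where "dt = (\<lambda>(a::real^2) (b::real^2). a$1*b$2 - a$2*b$1)"
  have id: "dt b c *\<^sub>R a - dt a c *\<^sub>R b + dt a b *\<^sub>R c = 0" for a b c :: "real^2"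
    unfolding dt_def by (rule det2_identity)
  have H0: "H 0 w = 0" "H w 0 = 0" for w using bilinear_lzero[OF bl] bilinear_rzero[OF bl] by auto
  note blr = bilinear_ladd[OF bl] bilinear_lsub[OF bl] bilinear_lmul[OF bl]
  have on2: "H X2 X1 = 0" using on sym by metis
  have dne: "dt X1 X2 \<noteq> 0"
  proof
    assume d0: "dt X1 X2 = 0"
    have dc: "dt X2 c = 0" for c
    proof -
      have "H (dt X2 c *\<^sub>R X1 - dt X1 c *\<^sub>R X2 + dt X1 X2 *\<^sub>R c) X1 = 0" using id[of X2 c X1] H0 by simp
      then show ?thesis using d0 on on2 by (simp add: blr)
    qed
    have "X2 $ 2 = 0" using dc[of "axis 1 1"] unfolding dt_def by (simp add: axis_def)
    moreover have "X2 $ 1 = 0" using dc[of "axis 2 1"] unfolding dt_def by (simp add: axis_def)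
    ultimately have "X2 = 0" by (simp add: vec_eq_iff forall_2)
    then show False using on(2) H0 by simp
  qed
  define w where "w = v - H v X1 *\<^sub>R X1 - H v X2 *\<^sub>R X2"
  have w1: "H w X1 = 0" and w2: "H w X2 = 0" using on on2 unfolding w_def by (simp_all add: blr)
  have w1': "H X1 w = 0" and w2': "H X2 w = 0" using w1 w2 sym by metis+
  have "H (dt X2 w *\<^sub>R X1 - dt X1 w *\<^sub>R X2 + dt X1 X2 *\<^sub>R w) w = 0" using id[of X2 w X1] H0 by simp
  then have "dt X1 X2 * H w w = 0" using w1' w2' by (simp add: blr)
  then have "H w w = 0" using dne by simp
  then have "w = 0" using pos by force
  then show ?thesis unfolding w_def by (simp add: algebra_simps)
qed

lemma lincomb2:
  fixes x y :: "'a::real_vector"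
  shows "p *\<^sub>R (a *\<^sub>R x + b *\<^sub>R y) + q *\<^sub>R (c *\<^sub>R x + d *\<^sub>R y) = (p*a + q*c) *\<^sub>R x + (p*b + q*d) *\<^sub>R y"
  by (simp add: algebra_simps)

lemma orth_alg1:
  fixes a b c d k11 k12 k22 :: real
  assumes "a^2 + b^2 = 1" "c^2 + d^2 = 1" "a*c + b*d = 0"
  shows "((a^2*k11 + 2*a*b*k12 + b^2*k22) - (c^2*k11 + 2*c*d*k12 + d^2*k22)) * a
           + 2 * (a*c*k11 + (a*d+b*c)*k12 + b*d*k22) * c = a*(k11 - k22) + b*(2*k12)"
    and "((a^2*k11 + 2*a*b*k12 + b^2*k22) - (c^2*k11 + 2*c*d*k12 + d^2*k22)) * b
           + 2 * (a*c*k11 + (a*d+b*c)*k12 + b*d*k22) * d = a*(2*k12) - b*(k11 - k22)"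
proof -
  define e where "e = a*d - b*c"
  have e2: "e^2 = 1"
  proof -
    have "e^2 + (a*c + b*d)^2 = (a^2+b^2)*(c^2+d^2)" unfolding e_def by algebra
    then show ?thesis using assms by simp
  qed
  have ce: "c = -b*e"
  proof -
    have "c = c*(a^2+b^2) - a*(a*c+b*d)" using assms by simp
    also have "... = -b*e" unfolding e_def by algebra
    finally show ?thesis .
  qed
  have de: "d = a*e"
  proof -
    have "d = d*(a^2+b^2) - b*(a*c+b*d)" using assms by simp
    also have "... = a*e" unfolding e_def by algebra
    finally show ?thesis .
  qed
  have ab: "b^2 = 1 - a^2" using assms by simp
  show "((a^2*k11 + 2*a*b*k12 + b^2*k22) - (c^2*k11 + 2*c*d*k12 + d^2*k22)) * a
           + 2 * (a*c*k11 + (a*d+b*c)*k12 + b*d*k22) * c = a*(k11 - k22) + b*(2*k12)"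
    unfolding ce de using e2 assms(1) by algebra
  show "((a^2*k11 + 2*a*b*k12 + b^2*k22) - (c^2*k11 + 2*c*d*k12 + d^2*k22)) * b
           + 2 * (a*c*k11 + (a*d+b*c)*k12 + b*d*k22) * d = a*(2*k12) - b*(k11 - k22)"
    unfolding ce de using e2 assms(1) by algebra
qed

lemma frame_change:
  fixes H :: "real^2 \<Rightarrow> real^2 \<Rightarrow> real" and S :: "real^2 \<Rightarrow> real^2"
  assumes bl: "bilinear H" and sym: "\<And>v w. H v w = H w v" and pos: "\<And>v. v \<noteq> 0 \<Longrightarrow> H v v > 0"
    and lin: "linear S" and sa: "\<And>v w. H v (S w) = H w (S v)"
    and X: "H X1 X1 = 1" "H X2 X2 = 1" "H X1 X2 = 0"
    and Y: "H Y1 Y1 = 1" "H Y2 Y2 = 1" "H Y1 Y2 = 0"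
  shows "cB H S Y1 Y2 = H Y1 X1 *\<^sub>R cB H S X1 X2 - H Y1 X2 *\<^sub>R (H (cB H S X1 X2) X1 *\<^sub>R X2 - H (cB H S X1 X2) X2 *\<^sub>R X1)"
proof -
  note blr = bilinear_ladd[OF bl] bilinear_lsub[OF bl] bilinear_lmul[OF bl]
    bilinear_radd[OF bl] bilinear_rsub[OF bl] bilinear_rmul[OF bl]
  note linr = linear_add[OF lin] linear_scale[OF lin]
  have X2: "H X2 X1 = 0" using X sym by metis
  obtain a b where y1: "Y1 = a *\<^sub>R X1 + b *\<^sub>R X2"
    using frame_expand[OF bl sym pos X, of Y1] by blast
  obtain c d where y2: "Y2 = c *\<^sub>R X1 + d *\<^sub>R X2"
    using frame_expand[OF bl sym pos X, of Y2] by blast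
  define k11 where "k11 = H X1 (S X1)"
  define k12 where "k12 = H X1 (S X2)"
  define k22 where "k22 = H X2 (S X2)"
  have k21: "H X2 (S X1) = k12" unfolding k12_def using sa by metis
  have o1: "a^2 + b^2 = 1" using Y(1) unfolding y1 by (simp add: blr X X2 power2_eq_square)
  have o2: "c^2 + d^2 = 1" using Y(2) unfolding y2 by (simp add: blr X X2 power2_eq_square)
  have o3: "a*c + b*d = 0" using Y(3) unfolding y1 y2 by (simp add: blr X X2 algebra_simps)
  have m11: "H Y1 (S Y1) = a^2*k11 + 2*a*b*k12 + b^2*k22"
    unfolding y1 by (simp add: blr linr k21 flip: k11_def k12_def k22_def) (simp add: algebra_simps power2_eq_square)
  have m22: "H Y2 (S Y2) = c^2*k11 + 2*c*d*k12 + d^2*k22"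
    unfolding y2 by (simp add: blr linr k21 flip: k11_def k12_def k22_def) (simp add: algebra_simps power2_eq_square)
  have m12: "H Y1 (S Y2) = a*c*k11 + (a*d+b*c)*k12 + b*d*k22"
    unfolding y1 y2 by (simp add: blr linr k21 flip: k11_def k12_def k22_def) (simp add: algebra_simps)
  have cx: "cB H S X1 X2 = (k11 - k22) *\<^sub>R X1 + (2*k12) *\<^sub>R X2"
    unfolding cB_def k11_def k12_def k22_def by simp
  have hc1: "H (cB H S X1 X2) X1 = k11 - k22" unfolding cx by (simp add: blr X X2)
  have hc2: "H (cB H S X1 X2) X2 = 2*k12" unfolding cx by (simp add: blr X X2)
  have a1: "H Y1 X1 = a" unfolding y1 by (simp add: blr X X2)
  have b1: "H Y1 X2 = b" unfolding y1 by (simp add: blr X X2)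
  have "cB H S Y1 Y2 = (H Y1 (S Y1) - H Y2 (S Y2)) *\<^sub>R (a *\<^sub>R X1 + b *\<^sub>R X2) + (2 * H Y1 (S Y2)) *\<^sub>R (c *\<^sub>R X1 + d *\<^sub>R X2)"
    unfolding cB_def using y1 y2 by simp
  also have "... = (a*(k11 - k22) + b*(2*k12)) *\<^sub>R X1 + (a*(2*k12) - b*(k11 - k22)) *\<^sub>R X2"
    unfolding lincomb2 m11 m22 m12 orth_alg1[OF o1 o2 o3] ..
  also have "... = H Y1 X1 *\<^sub>R cB H S X1 X2 - H Y1 X2 *\<^sub>R (H (cB H S X1 X2) X1 *\<^sub>R X2 - H (cB H S X1 X2) X2 *\<^sub>R X1)"
    unfolding a1 b1 hc1 hc2 by (simp add: cx algebra_simps)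
  finally show ?thesis .
qed

lemma frame_inj:
  fixes H :: "real^2 \<Rightarrow> real^2 \<Rightarrow> real"
  assumes bl: "bilinear H" and sym: "\<And>v w. H v w = H w v" and pos: "\<And>v. v \<noteq> 0 \<Longrightarrow> H v v > 0"
    and X: "H X1 X1 = 1" "H X2 X2 = 1" "H X1 X2 = 0"
    and Y: "H Y1 Y1 = 1"
    and eq: "H Y1 X1 *\<^sub>R v - H Y1 X2 *\<^sub>R (H v X1 *\<^sub>R X2 - H v X2 *\<^sub>R X1) = 0"
  shows "v = 0"
proof -
  note blr = bilinear_ladd[OF bl] bilinear_lsub[OF bl] bilinear_lmul[OF bl]
    bilinear_radd[OF bl] bilinear_rsub[OF bl] bilinear_rmul[OF bl]
  have X2: "H X2 X1 = 0" using X sym by metis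
  obtain a b where y1: "Y1 = a *\<^sub>R X1 + b *\<^sub>R X2"
    using frame_expand[OF bl sym pos X, of Y1] by blast
  obtain p q where v: "v = p *\<^sub>R X1 + q *\<^sub>R X2"
    using frame_expand[OF bl sym pos X, of v] by blast
  have o1: "a^2 + b^2 = 1" using Y(1) unfolding y1 by (simp add: blr X X2 power2_eq_square)
  have a1: "H Y1 X1 = a" unfolding y1 by (simp add: blr X X2)
  have b1: "H Y1 X2 = b" unfolding y1 by (simp add: blr X X2)
  have z: "(a*p + b*q) *\<^sub>R X1 + (a*q - b*p) *\<^sub>R X2 = 0"
    using eq unfolding a1 b1 v by (simp add: blr X X2 algebra_simps)
  have "H ((a*p + b*q) *\<^sub>R X1 + (a*q - b*p) *\<^sub>R X2) X1 = 0"
    unfolding z by (rule bilinear_lzero[OF bl])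
  then have e1: "a*p + b*q = 0" by (simp add: blr X X2)
  have "H ((a*p + b*q) *\<^sub>R X1 + (a*q - b*p) *\<^sub>R X2) X2 = 0"
    unfolding z by (rule bilinear_lzero[OF bl])
  then have e2: "a*q - b*p = 0" by (simp add: blr X X2)
  have "p = a*(a*p + b*q) - b*(a*q - b*p)" using o1 by algebra
  then have "p = 0" using e1 e2 by simp
  moreover have "q = b*(a*p + b*q) + a*(a*q - b*p)" using o1 by algebra
  then have "q = 0" using e1 e2 by simp
  ultimately show ?thesis using v by simp
qed

lemma cross_cross_r: "cross3 a (cross3 b c) = inner a c *\<^sub>R b - inner a b *\<^sub>R c"
  unfolding cross3_def inner_vec_def vec_eq_iff forall_3 sum_3 by (simp add: algebra_simps)

lemma cross_cross_l: "cross3 (cross3 a b) c = inner a c *\<^sub>R b - inner b c *\<^sub>R a"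
  unfolding cross3_def inner_vec_def vec_eq_iff forall_3 sum_3 by (simp add: algebra_simps)

lemma inner_cross_self: "inner (cross3 a b) a = 0" "inner (cross3 a b) b = 0"
  unfolding cross3_def inner_vec_def sum_3 by (simp_all add: algebra_simps)

locale surf =
  fixes U :: "(real^2) set" and f xi :: "real^2 \<Rightarrow> real^3"
    and h :: "real^2 \<Rightarrow> real^2 \<Rightarrow> real^2 \<Rightarrow> real" and B :: "real^2 \<Rightarrow> real^2 \<Rightarrow> real^2"
  assumes f_smooth: "smooth_on U f" and xi_smooth: "smooth_on U xi"
    and immersion: "\<forall>p\<in>U. inj (dmap f p)"
    and transversal: "\<forall>p\<in>U. xi p \<notin> range (dmap f p)"
    and h_def: "\<forall>p\<in>U. \<forall>v w. d2map f p v w - h p v w *\<^sub>R xi p \<in> range (dmap f p)"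
    and equiaffine: "\<forall>p\<in>U. \<forall>v. dmap xi p v = - dmap f p (B p v)"
    and h_posdef: "\<forall>p\<in>U. \<forall>v. v \<noteq> 0 \<longrightarrow> h p v v > 0"
begin

definition fN where "fN p = cross3 (pd [1] f p) (pd [2] f p)"

lemma U_open: "open U" using f_smooth smooth_open by blast

lemma dmap_f: assumes p: "p \<in> U" shows "dmap f p v = v$1 *\<^sub>R pd [1] f p + v$2 *\<^sub>R pd [2] f p"
  unfolding dmap_def fd_expand[OF smooth_diff[OF f_smooth p]] sum_2 ..

lemma dmap_linear: "p \<in> U \<Longrightarrow> linear (dmap f p)"
proof -
  assume "p \<in> U"
  then have "linear (frechet_derivative f (at p))" by (intro linear_frechet_derivative smooth_diff[OF f_smooth])
  moreover have "dmap f p = frechet_derivative f (at p)" by (simp add: fun_eq_iff dmap_def)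
  ultimately show ?thesis by simp
qed

lemma N_perp: "p \<in> U \<Longrightarrow> inner (fN p) (dmap f p v) = 0"
  by (simp add: dmap_f fN_def inner_add_right inner_cross_self)

lemma N_nz: assumes p: "p \<in> U" shows "fN p \<noteq> 0"
proof
  assume N0: "fN p = 0"
  define f1 where "f1 = pd [1] f p"
  define f2 where "f2 = pd [2] f p"
  define v :: "real^2" where "v = (\<chi> i. if i = 1 then inner f2 f2 else - inner f1 f2)"
  have "dmap f p v = inner f2 f2 *\<^sub>R f1 - inner f1 f2 *\<^sub>R f2"
    unfolding dmap_f[OF p] v_def f1_def f2_def by simp
  also have "... = cross3 f2 (cross3 f1 f2)" unfolding cross_cross_r by (simp add: inner_commute[of f2 f1])
  also have "... = 0" using N0 unfolding fN_def f1_def f2_def by simp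
  also have "... = dmap f p 0" by (simp add: dmap_f[OF p])
  finally have "v = 0" by (rule injD[OF immersion[rule_format, OF p]])
  then have "inner f2 f2 = 0" unfolding v_def by (simp add: vec_eq_iff forall_2)
  then have "f2 = 0" by simp
  then have "dmap f p (axis 2 1) = dmap f p 0" unfolding dmap_f[OF p] f2_def by (simp add: axis_def)
  then have "axis 2 (1::real) = (0::real^2)" by (rule injD[OF immersion[rule_format, OF p]])
  then show False by (simp add: axis_eq_0_iff)
qed

lemma Nxi_nz: assumes p: "p \<in> U" shows "inner (fN p) (xi p) \<noteq> 0"
proof
  assume z: "inner (fN p) (xi p) = 0"
  define N where "N = fN p"
  define f1 where "f1 = pd [1] f p"
  define f2 where "f2 = pd [2] f p"
  define y where "y = cross3 N (xi p)"
  have NN: "inner N N \<noteq> 0" using N_nz[OF p] unfolding N_def by simp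
  have "inner N N *\<^sub>R xi p = - cross3 N y"
    unfolding y_def cross_cross_r using z unfolding N_def by simp
  also have "... = inner f2 y *\<^sub>R f1 - inner f1 y *\<^sub>R f2"
    unfolding N_def fN_def f1_def f2_def cross_cross_l by simp
  finally have e: "inner N N *\<^sub>R xi p = inner f2 y *\<^sub>R f1 - inner f1 y *\<^sub>R f2" .
  define v :: "real^2" where "v = (\<chi> i. if i = 1 then inner f2 y / inner N N else - inner f1 y / inner N N)"
  have "dmap f p v = (1 / inner N N) *\<^sub>R (inner f2 y *\<^sub>R f1 - inner f1 y *\<^sub>R f2)"
    unfolding dmap_f[OF p] v_def f1_def f2_def by (simp add: algebra_simps divide_inverse)
  also have "... = xi p" unfolding e[symmetric] using NN by simp
  finally have "xi p \<in> range (dmap f p)" by (metis rangeI)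
  then show False using transversal p by blast
qed

lemma pd2: "pd [a] (pd [b] g) = pd [a, b] g"
  by simp

lemma d2map_f: assumes p: "p \<in> U"
  shows "d2map f p v w = (\<Sum>a\<in>UNIV. \<Sum>b\<in>UNIV. (v$a * w$b) *\<^sub>R pd [a, b] f p)"
proof -
  have e1: "\<And>q. q \<in> U \<Longrightarrow> dmap f q w = (\<Sum>b\<in>UNIV. w$b *\<^sub>R pd [b] f q)"
    unfolding dmap_def using fd_expand[OF smooth_diff[OF f_smooth]] by blast
  have "d2map f p v w = frechet_derivative (\<lambda>q. \<Sum>b\<in>UNIV. w$b *\<^sub>R pd [b] f q) (at p) v"
    unfolding d2map_def using fd_local[OF U_open p e1] by simp
  also have "frechet_derivative (\<lambda>q. \<Sum>b\<in>UNIV. w$b *\<^sub>R pd [b] f q) (at p)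
      = (\<lambda>v. \<Sum>b\<in>UNIV. w$b *\<^sub>R frechet_derivative (pd [b] f) (at p) v)"
    by (rule frechet_derivative_at[symmetric])
      (intro has_derivative_sum has_derivative_scaleR_right frechet_derivative_works[THEN iffD1]
        smooth_diff[OF smooth_pd[OF f_smooth] p])
  also have "(\<Sum>b\<in>UNIV. w$b *\<^sub>R frechet_derivative (pd [b] f) (at p) v)
      = (\<Sum>b\<in>UNIV. w$b *\<^sub>R (\<Sum>a\<in>UNIV. v$a *\<^sub>R pd [a, b] f p))"
    using fd_expand[OF smooth_diff[OF smooth_pd[OF f_smooth] p]] by (simp del: pd.simps add: pd2)
  also have "... = (\<Sum>a\<in>UNIV. \<Sum>b\<in>UNIV. (v$a * w$b) *\<^sub>R pd [a, b] f p)"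
    by (simp add: sum_2 algebra_simps del: pd.simps)
  finally show ?thesis .
qed

definition Hc where "Hc a b p = inner (fN p) (pd [a, b] f p) / inner (fN p) (xi p)"

lemma h_formula: assumes p: "p \<in> U"
  shows "h p v w = inner (fN p) (d2map f p v w) / inner (fN p) (xi p)"
proof -
  obtain z where z: "d2map f p v w - h p v w *\<^sub>R xi p = dmap f p z" using h_def p by blast
  have "inner (fN p) (d2map f p v w - h p v w *\<^sub>R xi p) = 0" unfolding z using N_perp[OF p] .
  then have "inner (fN p) (d2map f p v w) = h p v w * inner (fN p) (xi p)"
    by (simp add: inner_diff_right)
  then show ?thesis using Nxi_nz[OF p] by simp
qed

lemma h_expand: assumes p: "p \<in> U"
  shows "h p v w = (\<Sum>a\<in>UNIV. \<Sum>b\<in>UNIV. v$a * w$b * Hc a b p)"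
  unfolding h_formula[OF p] d2map_f[OF p] Hc_def
  by (simp add: sum_2 inner_add_right add_divide_distrib del: pd.simps)

lemma Hc_sym: "p \<in> U \<Longrightarrow> Hc a b p = Hc b a p"
  unfolding Hc_def using schwarz[OF f_smooth] by metis

lemma fN_smooth: "smooth_on U fN"
  unfolding fN_def[abs_def] by (intro smooth_cross smooth_pd f_smooth)

lemma Hc_smooth: "smooth_on U (Hc a b)"
proof -
  have "smooth_on U (\<lambda>p. inner (fN p) (pd [a, b] f p) * inverse (inner (fN p) (xi p)))"
    by (intro smooth_mult smooth_inner fN_smooth smooth_pd f_smooth smooth_inverse xi_smooth)
      (use Nxi_nz in blast)
  then show ?thesis unfolding Hc_def[abs_def] by (simp add: divide_inverse)
qed

lemma h_fun: "p \<in> U \<Longrightarrow> h p = (\<lambda>v w. v$1 * w$1 * Hc 1 1 p + v$1 * w$2 * Hc 1 2 p + (v$2 * w$1 * Hc 2 1 p + v$2 * w$2 * Hc 2 2 p))"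
  by (simp add: fun_eq_iff h_expand sum_2)

lemma h_bilinear: "p \<in> U \<Longrightarrow> bilinear (h p)"
  unfolding bilinear_def by (simp add: h_fun) (auto intro!: linearI simp: algebra_simps)

lemma h_sym: "p \<in> U \<Longrightarrow> h p v w = h p w v"
  using Hc_sym[of p 1 2] by (simp add: h_fun algebra_simps)

end

context surf begin

lemma dmap_xi: "dmap xi p (axis c 1) = pd [c] xi p" by (simp add: dmap_def)

lemma dmapxi_linear: "p \<in> U \<Longrightarrow> linear (dmap xi p)"
proof -
  assume "p \<in> U"
  then have "linear (frechet_derivative xi (at p))" by (intro linear_frechet_derivative smooth_diff[OF xi_smooth])
  moreover have "dmap xi p = frechet_derivative xi (at p)" by (simp add: fun_eq_iff dmap_def)
  ultimately show ?thesis by simp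
qed

lemma B_lin: assumes p: "p \<in> U" shows "B p v = v$1 *\<^sub>R B p (axis 1 1) + v$2 *\<^sub>R B p (axis 2 1)"
proof -
  have L: "linear (dmap f p)" by (rule dmap_linear[OF p])
  have lx: "linear (dmap xi p)" by (rule dmapxi_linear[OF p])
  have ea: "\<And>w. dmap xi p w = - dmap f p (B p w)" using equiaffine p by blast
  have vv: "v = v$1 *\<^sub>R axis 1 1 + v$2 *\<^sub>R axis 2 (1::real)"
    using vec_expand[of v] by (simp add: sum_2)
  have "dmap f p (B p v) = - dmap xi p v" using ea by simp
  also have "dmap xi p v = v$1 *\<^sub>R dmap xi p (axis 1 1) + v$2 *\<^sub>R dmap xi p (axis 2 1)"
    by (subst vv) (simp add: linear_add[OF lx] linear_scale[OF lx])
  also have "- ... = v$1 *\<^sub>R dmap f p (B p (axis 1 1)) + v$2 *\<^sub>R dmap f p (B p (axis 2 1))"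
    unfolding ea by simp
  also have "... = dmap f p (v$1 *\<^sub>R B p (axis 1 1) + v$2 *\<^sub>R B p (axis 2 1))"
    by (simp add: linear_add[OF L] linear_scale[OF L])
  finally show ?thesis by (rule injD[OF immersion[rule_format, OF p]])
qed

lemma B_linear: assumes p: "p \<in> U" shows "linear (B p)"
proof -
  have eq: "B p = (\<lambda>v. v$1 *\<^sub>R B p (axis 1 1) + v$2 *\<^sub>R B p (axis 2 1))"
    by (rule ext, rule B_lin[OF p])
  show ?thesis by (subst eq) (rule linearI, simp_all add: algebra_simps)
qed

lemma Bcol_eq: assumes p: "p \<in> U"
  shows "B p (axis c 1) $ 1 * inner (fN p) (fN p) = - inner (fN p) (cross3 (pd [c] xi p) (pd [2] f p))"
    and "B p (axis c 1) $ 2 * inner (fN p) (fN p) = - inner (fN p) (cross3 (pd [1] f p) (pd [c] xi p))"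
proof -
  define z where "z = B p (axis c 1)"
  have e: "z$1 *\<^sub>R pd [1] f p + z$2 *\<^sub>R pd [2] f p = - pd [c] xi p"
    using equiaffine p dmap_xi[of p c] dmap_f[OF p, of z] unfolding z_def by (metis minus_minus)
  have "cross3 (z$1 *\<^sub>R pd [1] f p + z$2 *\<^sub>R pd [2] f p) (pd [2] f p) = z$1 *\<^sub>R fN p"
    unfolding fN_def by (simp add: cross_add_left cross_mult_left)
  then have "z$1 *\<^sub>R fN p = - cross3 (pd [c] xi p) (pd [2] f p)" unfolding e by simp
  then have "inner (fN p) (z$1 *\<^sub>R fN p) = - inner (fN p) (cross3 (pd [c] xi p) (pd [2] f p))" by simp
  then show "B p (axis c 1) $ 1 * inner (fN p) (fN p) = - inner (fN p) (cross3 (pd [c] xi p) (pd [2] f p))"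
    unfolding z_def by (simp add: mult.commute)
  have "cross3 (pd [1] f p) (z$1 *\<^sub>R pd [1] f p + z$2 *\<^sub>R pd [2] f p) = z$2 *\<^sub>R fN p"
    unfolding fN_def by (simp add: cross_add_right cross_mult_right)
  then have "z$2 *\<^sub>R fN p = - cross3 (pd [1] f p) (pd [c] xi p)" unfolding e by simp
  then have "inner (fN p) (z$2 *\<^sub>R fN p) = - inner (fN p) (cross3 (pd [1] f p) (pd [c] xi p))" by simp
  then show "B p (axis c 1) $ 2 * inner (fN p) (fN p) = - inner (fN p) (cross3 (pd [1] f p) (pd [c] xi p))"
    unfolding z_def by (simp add: mult.commute)
qed

lemma NN_nz: "p \<in> U \<Longrightarrow> inner (fN p) (fN p) \<noteq> 0"
  using N_nz by simp

lemma Bcol_smooth: "smooth_on U (\<lambda>p. B p (axis c 1))"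
proof (rule smooth_vecI[OF U_open])
  fix i :: 2
  have s1: "smooth_on U (\<lambda>p. B p (axis c 1) $ 1)"
  proof -
    have "smooth_on U (\<lambda>p. (- 1) * (inner (fN p) (cross3 (pd [c] xi p) (pd [2] f p)) * inverse (inner (fN p) (fN p))))"
      by (intro smooth_mult smooth_const U_open smooth_inner fN_smooth smooth_cross smooth_pd xi_smooth f_smooth
          smooth_inverse) (use NN_nz in blast)
    then show ?thesis
    proof (rule smooth_cong)
      fix y assume y: "y \<in> U"
      show "(- 1) * (inner (fN y) (cross3 (pd [c] xi y) (pd [2] f y)) * inverse (inner (fN y) (fN y))) = B y (axis c 1) $ 1"
        using Bcol_eq(1)[OF y, of c] NN_nz[OF y] by (simp add: field_simps)
    qed
  qed
  have s2: "smooth_on U (\<lambda>p. B p (axis c 1) $ 2)"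
  proof -
    have "smooth_on U (\<lambda>p. (- 1) * (inner (fN p) (cross3 (pd [1] f p) (pd [c] xi p)) * inverse (inner (fN p) (fN p))))"
      by (intro smooth_mult smooth_const U_open smooth_inner fN_smooth smooth_cross smooth_pd xi_smooth f_smooth
          smooth_inverse) (use NN_nz in blast)
    then show ?thesis
    proof (rule smooth_cong)
      fix y assume y: "y \<in> U"
      show "(- 1) * (inner (fN y) (cross3 (pd [1] f y) (pd [c] xi y)) * inverse (inner (fN y) (fN y))) = B y (axis c 1) $ 2"
        using Bcol_eq(2)[OF y, of c] NN_nz[OF y] by (simp add: field_simps)
    qed
  qed
  show "smooth_on U (\<lambda>p. B p (axis c 1) $ i)"
    using s1 s2 exhaust_2[of i] by auto
qed

definition Bc where "Bc b c p = B p (axis c 1) $ b"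

lemma Bc_smooth: "smooth_on U (Bc b c)"
  unfolding Bc_def[abs_def] by (rule smooth_nth[OF Bcol_smooth])

lemma T_formula: assumes p: "p \<in> U"
  shows "inner (fN p) (pd [a, c] xi p) = - (Bc 1 c p * Hc a 1 p + Bc 2 c p * Hc a 2 p) * inner (fN p) (xi p)"
proof -
  define Z1 where "Z1 = (\<lambda>q. (- Bc 1 c q) *\<^sub>R pd [1] f q)"
  define Z2 where "Z2 = (\<lambda>q. (- Bc 2 c q) *\<^sub>R pd [2] f q)"
  have sB: "smooth_on U (\<lambda>q. - Bc b c q)" for b
    using smooth_mult[OF smooth_const[OF U_open, of "-1"] Bc_smooth[of b c]] by simp
  have sZ1: "smooth_on U Z1" unfolding Z1_def by (intro smooth_scaleR sB smooth_pd f_smooth)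
  have sZ2: "smooth_on U Z2" unfolding Z2_def by (intro smooth_scaleR sB smooth_pd f_smooth)
  have eq: "pd [c] xi q = Z1 q + Z2 q" if q: "q \<in> U" for q
  proof -
    have "pd [c] xi q = - dmap f q (B q (axis c 1))" using equiaffine q dmap_xi[of q c] by metis
    then show ?thesis unfolding Z1_def Z2_def dmap_f[OF q] Bc_def by simp
  qed
  have "pd [a, c] xi p = pd [a] (pd [c] xi) p" by simp
  also have "... = pd [a] (\<lambda>q. Z1 q + Z2 q) p"
    by (rule pd_local[OF U_open _ p]) (use eq in simp)
  also have "... = pd [a] Z1 p + pd [a] Z2 p"
    using pd_add[OF U_open, of "[a]" Z1 Z2] smooth_diff[OF sZ1] smooth_diff[OF sZ2] p by simp
  also have "pd [a] Z1 p = (- Bc 1 c p) *\<^sub>R pd [a] (pd [1] f) p + pd [a] (\<lambda>q. - Bc 1 c q) p *\<^sub>R pd [1] f p"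
    unfolding Z1_def by (rule pd1_bilinear[OF bounded_bilinear_scaleR smooth_diff[OF sB p] smooth_diff[OF smooth_pd[OF f_smooth] p]])
  also have "pd [a] Z2 p = (- Bc 2 c p) *\<^sub>R pd [a] (pd [2] f) p + pd [a] (\<lambda>q. - Bc 2 c q) p *\<^sub>R pd [2] f p"
    unfolding Z2_def by (rule pd1_bilinear[OF bounded_bilinear_scaleR smooth_diff[OF sB p] smooth_diff[OF smooth_pd[OF f_smooth] p]])
  finally have e2: "pd [a, c] xi p = (- Bc 1 c p) *\<^sub>R pd [a, 1] f p + pd [a] (\<lambda>q. - Bc 1 c q) p *\<^sub>R pd [1] f p
      + ((- Bc 2 c p) *\<^sub>R pd [a, 2] f p + pd [a] (\<lambda>q. - Bc 2 c q) p *\<^sub>R pd [2] f p)"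
    by (simp only: pd2)
  have n1: "inner (fN p) (pd [1] f p) = 0" and n2: "inner (fN p) (pd [2] f p) = 0"
    unfolding fN_def by (simp_all only: inner_cross_self)
  have h1: "inner (fN p) (pd [a, b] f p) = Hc a b p * inner (fN p) (xi p)" for b
    unfolding Hc_def using Nxi_nz[OF p] by simp
  show ?thesis unfolding e2 by (simp only: inner_add_right inner_scaleR_right n1 n2 h1) (simp add: algebra_simps)
qed

lemma T_sym: assumes p: "p \<in> U"
  shows "Bc 1 2 p * Hc 1 1 p + Bc 2 2 p * Hc 1 2 p = Bc 1 1 p * Hc 2 1 p + Bc 2 1 p * Hc 2 2 p"
proof -
  have "- (Bc 1 2 p * Hc 1 1 p + Bc 2 2 p * Hc 1 2 p) * inner (fN p) (xi p) = - (Bc 1 1 p * Hc 2 1 p + Bc 2 1 p * Hc 2 2 p) * inner (fN p) (xi p)"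
    using T_formula[OF p, of 1 2] T_formula[OF p, of 2 1] schwarz[OF xi_smooth p, of 1 2] by metis
  then have "(Bc 1 2 p * Hc 1 1 p + Bc 2 2 p * Hc 1 2 p) * inner (fN p) (xi p) = (Bc 1 1 p * Hc 2 1 p + Bc 2 1 p * Hc 2 2 p) * inner (fN p) (xi p)"
    by (simp only: minus_mult_left neg_equal_iff_equal)
  then show ?thesis using Nxi_nz[OF p] by simp
qed

lemma B_comp: assumes p: "p \<in> U" shows "B p v $ b = v$1 * Bc b 1 p + v$2 * Bc b 2 p"
  using B_lin[OF p, of v] by (simp add: Bc_def)

lemma selfadj: assumes p: "p \<in> U" shows "h p v (B p w) = h p w (B p v)"
proof -
  have "h p v (B p w) - h p w (B p v) = (v$1 * w$2 - v$2 * w$1) *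
     ((Bc 1 2 p * Hc 1 1 p + Bc 2 2 p * Hc 1 2 p) - (Bc 1 1 p * Hc 2 1 p + Bc 2 1 p * Hc 2 2 p))"
    unfolding h_fun[OF p] B_comp[OF p] by (simp add: algebra_simps)
  then show ?thesis using T_sym[OF p] by simp
qed

end

lemma smooth_minus:
  assumes "smooth_on S f" "smooth_on S g"
  shows "smooth_on S (\<lambda>y. f y - g y)"
proof -
  have "smooth_on S (\<lambda>y. - g y)"
    by (rule smooth_linear[OF bounded_linear_minus[OF bounded_linear_ident] assms(2)])
  then have "smooth_on S (\<lambda>y. f y + - g y)" by (rule smooth_add[OF assms(1)])
  then show ?thesis by simp
qed

context surf begin

lemma sm_h: assumes S: "S \<subseteq> U" and F: "smooth_on S F" and G: "smooth_on S G"
  shows "smooth_on S (\<lambda>p. h p (F p) (G p))"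
proof -
  have oS: "open S" using F smooth_open by blast
  have Hs: "smooth_on S (Hc a b)" for a b using smooth_mono[OF Hc_smooth oS S] .
  have "smooth_on S (\<lambda>p. F p$1 * G p$1 * Hc 1 1 p + F p$1 * G p$2 * Hc 1 2 p + (F p$2 * G p$1 * Hc 2 1 p + F p$2 * G p$2 * Hc 2 2 p))"
    by (intro smooth_add smooth_mult smooth_nth F G Hs)
  then show ?thesis
  proof (rule smooth_cong)
    fix y assume "y \<in> S"
    then have "y \<in> U" using S by blast
    then show "F y$1 * G y$1 * Hc 1 1 y + F y$1 * G y$2 * Hc 1 2 y + (F y$2 * G y$1 * Hc 2 1 y + F y$2 * G y$2 * Hc 2 2 y) = h y (F y) (G y)"
      by (simp add: h_fun)
  qed
qed

lemma sm_B: assumes S: "S \<subseteq> U" and F: "smooth_on S F"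
  shows "smooth_on S (\<lambda>p. B p (F p))"
proof -
  have oS: "open S" using F smooth_open by blast
  have Bs: "smooth_on S (\<lambda>p. B p (axis c 1))" for c using smooth_mono[OF Bcol_smooth oS S] .
  have "smooth_on S (\<lambda>p. F p$1 *\<^sub>R B p (axis 1 1) + F p$2 *\<^sub>R B p (axis 2 1))"
    by (intro smooth_add smooth_scaleR smooth_nth F Bs)
  then show ?thesis
  proof (rule smooth_cong)
    fix y assume "y \<in> S"
    then have "y \<in> U" using S by blast
    then show "F y$1 *\<^sub>R B y (axis 1 1) + F y$2 *\<^sub>R B y (axis 2 1) = B y (F y)"
      by (simp add: B_lin[symmetric])
  qed
qed

lemma sm_calB: assumes S: "S \<subseteq> U" and X: "smooth_on S X1" "smooth_on S X2"
  shows "smooth_on S (calB h B X1 X2)"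
proof -
  have oS: "open S" using X smooth_open by blast
  have "smooth_on S (\<lambda>p. (h p (X1 p) (B p (X1 p)) - h p (X2 p) (B p (X2 p))) *\<^sub>R X1 p
     + (2 * h p (X1 p) (B p (X2 p))) *\<^sub>R X2 p)"
    by (intro smooth_add smooth_scaleR smooth_minus smooth_mult smooth_const oS sm_h S sm_B X)
  then show ?thesis unfolding calB_def[abs_def] .
qed

lemma frames_rel:
  assumes S: "S \<subseteq> U"
    and X: "smooth_on S X1" "smooth_on S X2" "h_orthonormal_frame h S X1 X2"
    and Y: "smooth_on S Y1" "smooth_on S Y2" "h_orthonormal_frame h S Y1 Y2"
    and r: "r \<in> S"
  shows "\<exists>L. (\<forall>p\<in>S. linear (L p)) \<and> (\<forall>j. isCont (\<lambda>p. L p (axis j 1)) r)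
      \<and> (\<forall>p\<in>S. calB h B Y1 Y2 p = L p (calB h B X1 X2 p)) \<and> (\<forall>v. L r v = 0 \<longrightarrow> v = 0)"
proof -
  have oS: "open S" using X smooth_open by blast
  define L where "L p v = h p (Y1 p) (X1 p) *\<^sub>R v - h p (Y1 p) (X2 p) *\<^sub>R (h p v (X1 p) *\<^sub>R X2 p - h p v (X2 p) *\<^sub>R X1 p)" for p v
  have pU: "p \<in> U" if "p \<in> S" for p using that S by blast
  have Xo: "h p (X1 p) (X1 p) = 1" "h p (X2 p) (X2 p) = 1" "h p (X1 p) (X2 p) = 0" if "p \<in> S" for p
    using X(3) that unfolding h_orthonormal_frame_def by auto
  have Yo: "h p (Y1 p) (Y1 p) = 1" "h p (Y2 p) (Y2 p) = 1" "h p (Y1 p) (Y2 p) = 0" if "p \<in> S" for p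
    using Y(3) that unfolding h_orthonormal_frame_def by auto
  have pos: "\<And>v. v \<noteq> 0 \<Longrightarrow> h p v v > 0" if "p \<in> U" for p using h_posdef that by blast
  have lin: "linear (L p)" if p: "p \<in> S" for p
  proof -
    note bl = h_bilinear[OF pU[OF p]]
    show ?thesis unfolding L_def
      by (rule linearI) (simp_all add: bilinear_ladd[OF bl] bilinear_lmul[OF bl] algebra_simps)
  qed
  have cont: "isCont (\<lambda>p. L p (axis j 1)) r" for j
  proof -
    have "smooth_on S (\<lambda>p. L p (axis j 1))"
      unfolding L_def
      by (intro smooth_minus smooth_scaleR sm_h S X Y smooth_const oS)
    then show ?thesis using smooth_cont r by blast
  qed
  have rel: "calB h B Y1 Y2 p = L p (calB h B X1 X2 p)" if p: "p \<in> S" for p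
  proof -
    have pu: "p \<in> U" by (rule pU[OF p])
    have sy: "\<And>v w. h p v w = h p w v" using h_sym[OF pu] by blast
    have ps: "\<And>v. v \<noteq> 0 \<Longrightarrow> h p v v > 0" using pos[OF pu] by blast
    have sa: "\<And>v w. h p v (B p w) = h p w (B p v)" using selfadj[OF pu] by blast
    have "calB h B Y1 Y2 p = cB (h p) (B p) (Y1 p) (Y2 p)" by (simp add: calB_def cB_def)
    also have "... = L p (cB (h p) (B p) (X1 p) (X2 p))"
      unfolding L_def
      by (rule frame_change[OF h_bilinear[OF pu] sy ps B_linear[OF pu] sa Xo[OF p] Yo[OF p]])
    also have "cB (h p) (B p) (X1 p) (X2 p) = calB h B X1 X2 p" by (simp add: calB_def cB_def)
    finally show ?thesis .
  qed
  have inj: "v = 0" if Lv: "L r v = 0" for v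
  proof -
    have Lv': "h r (Y1 r) (X1 r) *\<^sub>R v - h r (Y1 r) (X2 r) *\<^sub>R (h r v (X1 r) *\<^sub>R X2 r - h r v (X2 r) *\<^sub>R X1 r) = 0"
      using Lv unfolding L_def .
    have pu: "r \<in> U" by (rule pU[OF r])
    have sy: "\<And>v w. h r v w = h r w v" using h_sym[OF pu] by blast
    have ps: "\<And>v. v \<noteq> 0 \<Longrightarrow> h r v v > 0" using pos[OF pu] by blast
    show ?thesis
      by (rule frame_inj[OF h_bilinear[OF pu] sy ps Xo[OF r] Yo(1)[OF r] Lv'])
  qed
  show ?thesis using lin cont rel inj by blast
qed

end

definition Dm :: "nat \<Rightarrow> (real^'n::finite \<Rightarrow> 'b::real_normed_vector) \<Rightarrow> real^'n \<Rightarrow> real^'n \<Rightarrow> 'b" where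
  "Dm m V x u = (\<Sum>is\<in>{is::'n list. length is = m}. (\<Prod>i\<leftarrow>is. u $ i) *\<^sub>R pd is V x)"

lemma finite_len: "finite {is::'n::finite list. length is = m}"
  using finite_lists_length_eq[of "UNIV::'n set" m] by simp

lemma jet_Dm: "jet k V r x = (\<Sum>m\<le>k. inverse (fact m) *\<^sub>R Dm m V r (x - r))"
  unfolding jet_def Dm_def by (simp add: scaleR_sum_right)

lemma prod_scale: "(\<Prod>i\<leftarrow>is. (t *\<^sub>R u) $ i) = t ^ length is * (\<Prod>i\<leftarrow>is. u $ i)"
  by (induction "is") (auto simp: algebra_simps)

lemma Dm_homog: "Dm m V x (t *\<^sub>R u) = t^m *\<^sub>R Dm m V x u"
  unfolding Dm_def scaleR_sum_right
  by (rule sum.cong) (auto simp: prod_scale)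

lemma Dm_0: "Dm 0 V x u = V x"
proof -
  have "{is::'a list. length is = 0} = {[]}" by auto
  then show ?thesis unfolding Dm_def by simp
qed

lemma len_Suc_image: "{js::'n list. length js = Suc m} = (\<lambda>(i, is). i # is) ` (UNIV \<times> {is. length is = m})"
  by (auto simp: length_Suc_conv image_iff)

lemma Dm_Suc: "Dm (Suc m) V x u = (\<Sum>is\<in>{is::'n::finite list. length is = m}. (\<Prod>i\<leftarrow>is. u $ i) *\<^sub>R (\<Sum>i\<in>UNIV. u$i *\<^sub>R pd (i # is) V x))"
proof -
  have inj: "inj_on (\<lambda>(i, is). i # is) (UNIV \<times> {is::'n list. length is = m})"
    by (auto simp: inj_on_def)
  have "Dm (Suc m) V x u = (\<Sum>(i, is)\<in>UNIV \<times> {is::'n list. length is = m}. (\<Prod>i\<leftarrow>i # is. u $ i) *\<^sub>R pd (i # is) V x)"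
    unfolding Dm_def len_Suc_image sum.reindex[OF inj] by (simp add: case_prod_beta comp_def)
  also have "... = (\<Sum>i\<in>UNIV. \<Sum>is\<in>{is::'n list. length is = m}. (u $ i * (\<Prod>i\<leftarrow>is. u $ i)) *\<^sub>R pd (i # is) V x)"
    by (simp add: sum.cartesian_product)
  also have "... = (\<Sum>is\<in>{is::'n list. length is = m}. \<Sum>i\<in>UNIV. (u $ i * (\<Prod>i\<leftarrow>is. u $ i)) *\<^sub>R pd (i # is) V x)"
    by (rule sum.swap)
  also have "... = (\<Sum>is\<in>{is::'n list. length is = m}. (\<Prod>i\<leftarrow>is. u $ i) *\<^sub>R (\<Sum>i\<in>UNIV. u$i *\<^sub>R pd (i # is) V x))"
    by (simp add: scaleR_sum_right mult.commute)
  finally show ?thesis .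
qed

lemma Dm_deriv:
  assumes sm: "smooth_on S V" and y: "a + s *\<^sub>R u \<in> S"
  shows "((\<lambda>s. Dm m V (a + s *\<^sub>R u) u) has_vector_derivative Dm (Suc m) V (a + s *\<^sub>R u) u) (at s)"
proof -
  have d: "((\<lambda>s. pd is V (a + s *\<^sub>R u)) has_vector_derivative (\<Sum>i\<in>UNIV. u$i *\<^sub>R pd (i # is) V (a + s *\<^sub>R u))) (at s)" for "is"
  proof -
    have df: "pd is V differentiable (at (a + s *\<^sub>R u))" by (rule smooth_pd_diff[OF sm y])
    have "frechet_derivative (pd is V) (at (a + s *\<^sub>R u)) u = (\<Sum>i\<in>UNIV. u$i *\<^sub>R pd [i] (pd is V) (a + s *\<^sub>R u))"
      by (rule fd_expand[OF df])
    also have "... = (\<Sum>i\<in>UNIV. u$i *\<^sub>R pd (i # is) V (a + s *\<^sub>R u))" by simp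
    finally show ?thesis using line_deriv[OF df] by simp
  qed
  show ?thesis unfolding Dm_def Dm_Suc[unfolded Dm_def]
    by (intro has_vector_derivative_sum bounded_linear.has_vector_derivative[OF bounded_linear_scaleR_right] d)
qed

definition small :: "nat \<Rightarrow> (real \<Rightarrow> 'b::real_normed_vector) \<Rightarrow> bool" where
  "small k F \<longleftrightarrow> ((\<lambda>t. (1 / t^k) *\<^sub>R F t) \<longlongrightarrow> 0) (at 0)"

lemma small_cong: "small k F \<Longrightarrow> (\<forall>\<^sub>F t in at 0. F t = G t) \<Longrightarrow> small k G"
  unfolding small_def
  by (rule Lim_transform_eventually) (auto elim: eventually_mono)

lemma small_add: "small k F \<Longrightarrow> small k G \<Longrightarrow> small k (\<lambda>t. F t + G t)"
  unfolding small_def by (simp add: scaleR_add_right tendsto_add_zero)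

lemma small_diff: "small k F \<Longrightarrow> small k G \<Longrightarrow> small k (\<lambda>t. F t - G t)"
  unfolding small_def by (simp add: scaleR_diff_right tendsto_diff[of _ 0 _ _ 0, simplified])

lemma small_0: "small k (\<lambda>t. 0)"
  unfolding small_def by simp

lemma small_single:
  assumes "small k (\<lambda>t. t^k *\<^sub>R c)" shows "c = 0"
proof -
  have "\<forall>\<^sub>F t in at (0::real). (1 / t^k) *\<^sub>R (t^k *\<^sub>R c) = c"
    unfolding eventually_at by (rule exI[of _ 1]) auto
  then have "((\<lambda>t::real. c) \<longlongrightarrow> 0) (at 0)"
    using assms unfolding small_def by (rule Lim_transform_eventually[rotated])
  then show ?thesis by (rule LIM_const_eq)
qed

lemma small_unique:
  "small k (\<lambda>t. \<Sum>m\<le>k. t^m *\<^sub>R c m) \<Longrightarrow> \<forall>m\<le>k. c m = 0"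
proof (induction k)
  case 0
  then show ?case using small_single[of 0 "c 0"] by simp
next
  case (Suc k)
  define Q where "Q t = (\<Sum>m\<le>k. t^m *\<^sub>R c m)" for t :: real
  have P: "(\<Sum>m\<le>Suc k. t^m *\<^sub>R c m) = Q t + t^(Suc k) *\<^sub>R c (Suc k)" for t :: real
    unfolding Q_def by simp
  have lim1: "((\<lambda>t. t *\<^sub>R ((1 / t^(Suc k)) *\<^sub>R (\<Sum>m\<le>Suc k. t^m *\<^sub>R c m)) - t *\<^sub>R c (Suc k)) \<longlongrightarrow> 0 *\<^sub>R 0 - 0 *\<^sub>R c (Suc k)) (at 0)"
    using Suc.prems unfolding small_def
    by (intro tendsto_diff tendsto_scaleR tendsto_ident_at tendsto_const) auto
  have "\<forall>\<^sub>F t in at (0::real). t *\<^sub>R ((1 / t^(Suc k)) *\<^sub>R (\<Sum>m\<le>Suc k. t^m *\<^sub>R c m)) - t *\<^sub>R c (Suc k) = (1 / t^k) *\<^sub>R Q t"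
    unfolding eventually_at
    by (rule exI[of _ 1]) (auto simp: P Q_def scaleR_add_right field_simps)
  then have "small k Q" using lim1 unfolding small_def
    by (auto elim: Lim_transform_eventually)
  then have ck: "\<forall>m\<le>k. c m = 0" using Suc.IH unfolding Q_def by blast
  then have "Q t = 0" for t unfolding Q_def by simp
  then have "small (Suc k) (\<lambda>t. t^(Suc k) *\<^sub>R c (Suc k))" using Suc.prems P by simp
  then have "c (Suc k) = 0" by (rule small_single)
  then show ?case using ck le_Suc_eq by auto
qed

lemma jet_line: "jet k V r (r + t *\<^sub>R u) = (\<Sum>m\<le>k. (inverse (fact m) * t^m) *\<^sub>R Dm m V r u)"
  unfolding jet_Dm by (simp add: Dm_homog)

lemma taylor_comp:
  fixes V :: "real^'n::finite \<Rightarrow> real^'m::finite"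
  assumes sm: "smooth_on S V" and d: "d > 0" and inS: "\<And>s. \<bar>s\<bar> \<le> d \<Longrightarrow> r + s *\<^sub>R u \<in> S"
  shows "\<exists>M. \<forall>t. t \<noteq> 0 \<and> \<bar>t\<bar> \<le> d \<longrightarrow> \<bar>V (r + t *\<^sub>R u) $ j - jet k V r (r + t *\<^sub>R u) $ j\<bar> \<le> M * \<bar>t\<bar>^(Suc k)"
proof -
  define diff where "diff m s = Dm m V (r + s *\<^sub>R u) u $ j" for m s
  have D: "(diff m has_real_derivative diff (Suc m) s) (at s)" if "\<bar>s\<bar> \<le> d" for m s
  proof -
    have "((\<lambda>s. Dm m V (r + s *\<^sub>R u) u $ j) has_vector_derivative Dm (Suc m) V (r + s *\<^sub>R u) u $ j) (at s)"
      by (rule bounded_linear.has_vector_derivative[OF bounded_linear_vec_nth Dm_deriv[OF sm inS[OF that]]])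
    then show ?thesis unfolding diff_def has_real_derivative_iff_has_vector_derivative .
  qed
  have d0: "diff 0 = (\<lambda>s. V (r + s *\<^sub>R u) $ j)" unfolding diff_def by (simp add: Dm_0 fun_eq_iff)
  have "continuous_on {-d..d} (diff (Suc k))"
    by (rule continuous_at_imp_continuous_on) (use D DERIV_isCont in force)
  then have "bounded (diff (Suc k) ` {-d..d})" by (intro compact_imp_bounded compact_continuous_image compact_Icc)
  then obtain M where M': "\<forall>s\<in>{-d..d}. \<bar>diff (Suc k) s\<bar> \<le> M" unfolding bounded_iff by auto
  have M: "\<And>s. s \<in> {-d..d} \<Longrightarrow> \<bar>diff (Suc k) s\<bar> \<le> M" using M' by blast
  have M0: "M \<ge> 0" using M[of 0] d by force
  show ?thesis
  proof (intro exI allI impI)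
    fix t assume t: "t \<noteq> 0 \<and> \<bar>t\<bar> \<le> d"
    obtain \<xi> where \<xi>: "(if t < 0 then t < \<xi> \<and> \<xi> < 0 else 0 < \<xi> \<and> \<xi> < t)"
      and eq: "V (r + t *\<^sub>R u) $ j = (\<Sum>m<Suc k. diff m 0 / fact m * (t - 0)^m) + diff (Suc k) \<xi> / fact (Suc k) * (t - 0)^(Suc k)"
      using Taylor[of "Suc k" diff "\<lambda>s. V (r + s *\<^sub>R u) $ j" "-d" d 0 t] D d0 d t by (auto simp: abs_le_iff)
    have \<xi>d: "\<xi> \<in> {-d..d}" using \<xi> t by (auto split: if_splits)
    have jt: "jet k V r (r + t *\<^sub>R u) $ j = (\<Sum>m<Suc k. diff m 0 / fact m * (t - 0)^m)"
      unfolding jet_line diff_def lessThan_Suc_atMost by (simp add: field_simps)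
    have "\<bar>V (r + t *\<^sub>R u) $ j - jet k V r (r + t *\<^sub>R u) $ j\<bar> = \<bar>diff (Suc k) \<xi>\<bar> / fact (Suc k) * \<bar>t\<bar>^(Suc k)"
      unfolding eq jt by (simp add: abs_mult power_abs)
    also have "... \<le> M / fact (Suc k) * \<bar>t\<bar>^(Suc k)"
      using M[OF \<xi>d] by (intro mult_right_mono divide_right_mono) auto
    also have "... \<le> M * \<bar>t\<bar>^(Suc k)"
    proof -
      have f1: "(1::real) \<le> fact (Suc k)" by (rule fact_ge_1)
      have "M * 1 \<le> M * fact (Suc k)" by (rule mult_left_mono[OF f1 M0])
      then have "M / fact (Suc k) \<le> M" using f1 by (simp add: divide_le_eq)
      then show ?thesis by (intro mult_right_mono) auto
    qed
    finally show "\<bar>V (r + t *\<^sub>R u) $ j - jet k V r (r + t *\<^sub>R u) $ j\<bar> \<le> M * \<bar>t\<bar>^(Suc k)" .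
  qed
qed

lemma taylor_small:
  fixes V :: "real^'n::finite \<Rightarrow> real^'m::finite"
  assumes sm: "smooth_on S V" and r: "r \<in> S"
  shows "small k (\<lambda>t. V (r + t *\<^sub>R u) - jet k V r (r + t *\<^sub>R u))"
proof -
  have S: "open S" using sm smooth_open by blast
  obtain e where e: "e > 0" "ball r e \<subseteq> S" using S r open_contains_ball by blast
  define d where "d = e / (2 * (norm u + 1))"
  have nu: "0 < 2 * (norm u + 1)" by (smt (verit) norm_ge_zero)
  have d: "d > 0" unfolding d_def using e(1) nu by (rule divide_pos_pos)
  have inS: "r + s *\<^sub>R u \<in> S" if "\<bar>s\<bar> \<le> d" for s
  proof -
    have "norm (s *\<^sub>R u) = \<bar>s\<bar> * norm u" by simp
    also have "... \<le> d * norm u" using that by (simp add: mult_right_mono)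
    also have "... < e"
    proof -
      have "d * norm u \<le> d * (norm u + 1)" using d by simp
      also have "... = e / 2" using nu unfolding d_def by (simp add: field_simps)
      finally show ?thesis using e by simp
    qed
    finally have "dist (r + s *\<^sub>R u) r < e" by (simp add: dist_norm)
    then show ?thesis using e(2) by (auto simp: dist_commute)
  qed
  have "\<forall>j. \<exists>M. \<forall>t. t \<noteq> 0 \<and> \<bar>t\<bar> \<le> d \<longrightarrow> \<bar>V (r + t *\<^sub>R u) $ j - jet k V r (r + t *\<^sub>R u) $ j\<bar> \<le> M * \<bar>t\<bar>^(Suc k)"
    using taylor_comp[OF sm d inS] by blast
  then obtain M where M: "\<And>j t. t \<noteq> 0 \<Longrightarrow> \<bar>t\<bar> \<le> d \<Longrightarrow> \<bar>V (r + t *\<^sub>R u) $ j - jet k V r (r + t *\<^sub>R u) $ j\<bar> \<le> M j * \<bar>t\<bar>^(Suc k)"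
    by metis
  define F where "F t = V (r + t *\<^sub>R u) - jet k V r (r + t *\<^sub>R u)" for t
  have bnd: "norm ((1 / t^k) *\<^sub>R F t) \<le> (\<Sum>j\<in>UNIV. M j) * \<bar>t\<bar>" if t: "t \<noteq> 0" "\<bar>t\<bar> \<le> d" for t
  proof -
    have "norm (F t) \<le> (\<Sum>j\<in>UNIV. \<bar>F t $ j\<bar>)" by (rule norm_le_l1_cart)
    also have "... \<le> (\<Sum>j\<in>UNIV. M j * \<bar>t\<bar>^(Suc k))"
      by (rule sum_mono) (use M t in \<open>simp add: F_def\<close>)
    also have "... = (\<Sum>j\<in>UNIV. M j) * \<bar>t\<bar>^(Suc k)" by (simp add: sum_distrib_right)
    finally have "norm (F t) \<le> (\<Sum>j\<in>UNIV. M j) * \<bar>t\<bar>^(Suc k)" .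
    then have "norm (F t) / \<bar>t\<bar>^k \<le> (\<Sum>j\<in>UNIV. M j) * \<bar>t\<bar>^(Suc k) / \<bar>t\<bar>^k"
      by (rule divide_right_mono) simp
    also have "... = (\<Sum>j\<in>UNIV. M j) * \<bar>t\<bar>" using t by (simp add: field_simps)
    finally show ?thesis by (simp add: power_abs divide_inverse mult.commute)
  qed
  have "((\<lambda>t. (1 / t^k) *\<^sub>R F t) \<longlongrightarrow> 0) (at 0)"
  proof (rule Lim_null_comparison)
    show "\<forall>\<^sub>F t in at 0. norm ((1 / t^k) *\<^sub>R F t) \<le> (\<Sum>j\<in>UNIV. M j) * \<bar>t\<bar>"
      unfolding eventually_at using d bnd by (intro exI[of _ d]) auto
    have "((\<lambda>t::real. (\<Sum>j\<in>UNIV. M j) * \<bar>t\<bar>) \<longlongrightarrow> (\<Sum>j\<in>UNIV. M j) * \<bar>0\<bar>) (at 0)"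
      by (intro tendsto_intros)
    then show "((\<lambda>t::real. (\<Sum>j\<in>UNIV. M j) * \<bar>t\<bar>) \<longlongrightarrow> 0) (at 0)" by simp
  qed
  then show ?thesis unfolding small_def F_def .
qed

lemma L_expand:
  fixes L :: "real^'m::finite \<Rightarrow> 'b::real_vector"
  assumes "linear L" shows "L w = (\<Sum>j\<in>UNIV. (w$j) *\<^sub>R L (axis j 1))"
proof -
  have "L w = L (\<Sum>j\<in>UNIV. (w$j) *\<^sub>R axis j 1)" by (simp add: vec_expand)
  also have "... = (\<Sum>j\<in>UNIV. (w$j) *\<^sub>R L (axis j 1))"
    by (simp add: linear_sum[OF assms] linear_scale[OF assms])
  finally show ?thesis .
qed

lemma ev_line:
  fixes r u :: "'a::real_normed_vector"
  assumes "open S" "r \<in> S"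
  shows "\<forall>\<^sub>F t in at (0::real). r + t *\<^sub>R u \<in> S"
proof -
  have "((\<lambda>t. r + t *\<^sub>R u) \<longlongrightarrow> r + 0 *\<^sub>R u) (at (0::real))"
    by (intro tendsto_add tendsto_const tendsto_scaleR tendsto_ident_at)
  then have "((\<lambda>t. r + t *\<^sub>R u) \<longlongrightarrow> r) (at (0::real))" by simp
  then show ?thesis using topological_tendstoD assms by blast
qed

lemma lin_tendsto:
  fixes L :: "real^'n::finite \<Rightarrow> real^'m::finite \<Rightarrow> real^'m"
  assumes S: "open S" "r \<in> S" and lin: "\<forall>p\<in>S. linear (L p)" and cont: "\<forall>j. isCont (\<lambda>p. L p (axis j 1)) r"
    and F: "(F \<longlongrightarrow> c) (at (0::real))"
  shows "((\<lambda>t. L (r + t *\<^sub>R u) (F t)) \<longlongrightarrow> L r c) (at 0)"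
proof -
  have ev: "\<forall>\<^sub>F t in at (0::real). (\<Sum>j\<in>UNIV. (F t $ j) *\<^sub>R L (r + t *\<^sub>R u) (axis j 1)) = L (r + t *\<^sub>R u) (F t)"
    using ev_line[OF S, of u] by eventually_elim (use lin L_expand in metis)
  have "((\<lambda>t. r + t *\<^sub>R u) \<longlongrightarrow> r + 0 *\<^sub>R u) (at (0::real))"
    by (intro tendsto_add tendsto_const tendsto_scaleR tendsto_ident_at)
  then have lr: "((\<lambda>t. r + t *\<^sub>R u) \<longlongrightarrow> r) (at (0::real))" by simp
  have "((\<lambda>t. \<Sum>j\<in>UNIV. (F t $ j) *\<^sub>R L (r + t *\<^sub>R u) (axis j 1)) \<longlongrightarrow> (\<Sum>j\<in>UNIV. (c $ j) *\<^sub>R L r (axis j 1))) (at 0)"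
  proof (intro tendsto_sum tendsto_scaleR tendsto_vec_nth F)
    fix j show "((\<lambda>t. L (r + t *\<^sub>R u) (axis j 1)) \<longlongrightarrow> L r (axis j 1)) (at 0)"
      using isCont_tendsto_compose[OF cont[rule_format] lr] .
  qed
  then have "((\<lambda>t. L (r + t *\<^sub>R u) (F t)) \<longlongrightarrow> (\<Sum>j\<in>UNIV. (c $ j) *\<^sub>R L r (axis j 1))) (at 0)"
    using ev by (rule Lim_transform_eventually)
  moreover have "(\<Sum>j\<in>UNIV. (c $ j) *\<^sub>R L r (axis j 1)) = L r c" using L_expand lin S(2) by metis
  ultimately show ?thesis by simp
qed

lemma jet_line2: "jet k V r (r + t *\<^sub>R u) = (\<Sum>m\<le>k. t^m *\<^sub>R (inverse (fact m) *\<^sub>R Dm m V r u))"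
  unfolding jet_line by (simp add: mult.commute)

lemma jet_zero_iff:
  "jet k W r = (\<lambda>_. 0) \<longleftrightarrow> (\<forall>u. \<forall>m\<le>k. Dm m W r u = 0)"
proof
  assume z: "jet k W r = (\<lambda>_. 0)"
  show "\<forall>u. \<forall>m\<le>k. Dm m W r u = 0"
  proof (intro allI impI)
    fix u and m :: nat assume m: "m \<le> k"
    have "small k (\<lambda>t. \<Sum>m\<le>k. t^m *\<^sub>R (inverse (fact m) *\<^sub>R Dm m W r u))"
      using small_0 z jet_line2[of k W r _ u, symmetric] by (simp add: fun_eq_iff)
    then have "\<forall>m\<le>k. inverse (fact m) *\<^sub>R Dm m W r u = 0" by (rule small_unique)
    then show "Dm m W r u = 0" using m by simp
  qed
next
  assume "\<forall>u. \<forall>m\<le>k. Dm m W r u = 0"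
  then show "jet k W r = (\<lambda>_. 0)" by (simp add: fun_eq_iff jet_Dm)
qed

lemma jet_transfer:
  fixes V W :: "real^'n::finite \<Rightarrow> real^'m::finite" and L :: "real^'n \<Rightarrow> real^'m \<Rightarrow> real^'m"
  assumes sV: "smooth_on S V" and sW: "smooth_on S W" and r: "r \<in> S"
    and lin: "\<forall>p\<in>S. linear (L p)" and cont: "\<forall>j. isCont (\<lambda>p. L p (axis j 1)) r"
    and rel: "\<forall>p\<in>S. W p = L p (V p)"
  shows jet_transfer1: "jet k V r = (\<lambda>_. 0) \<Longrightarrow> jet k W r = (\<lambda>_. 0)"
    and jet_transfer2: "jet k V r = (\<lambda>_. 0) \<Longrightarrow> jet (Suc k) W r x = L r (jet (Suc k) V r x)"
proof -
  have S: "open S" using sV smooth_open by blast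
  have WL: "\<forall>\<^sub>F t in at (0::real). (1 / t^j) *\<^sub>R W (r + t *\<^sub>R u) = L (r + t *\<^sub>R u) ((1 / t^j) *\<^sub>R V (r + t *\<^sub>R u))" for j u
    using ev_line[OF S r, of u] by eventually_elim (use rel lin linear_scale in metis)
  show J1: "jet k W r = (\<lambda>_. 0)" if z: "jet k V r = (\<lambda>_. 0)" for k
  proof -
    have "\<forall>u. \<forall>m\<le>k. Dm m W r u = 0"
    proof (intro allI impI)
      fix u and m :: nat assume m: "m \<le> k"
      have sv: "small k (\<lambda>t. V (r + t *\<^sub>R u))"
        using taylor_small[OF sV r, of k u] z by simp
      have sw: "small k (\<lambda>t. W (r + t *\<^sub>R u))"
      proof -
        have "((\<lambda>t. L (r + t *\<^sub>R u) ((1 / t^k) *\<^sub>R V (r + t *\<^sub>R u))) \<longlongrightarrow> L r 0) (at 0)"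
          by (rule lin_tendsto[OF S r lin cont]) (use sv in \<open>simp add: small_def\<close>)
        then have "((\<lambda>t. (1 / t^k) *\<^sub>R W (r + t *\<^sub>R u)) \<longlongrightarrow> L r 0) (at 0)"
          using WL[of k u] by (auto elim: Lim_transform_eventually simp: eventually_mono)
        moreover have "L r 0 = 0" using lin r linear_0 by blast
        ultimately show ?thesis unfolding small_def by simp
      qed
      have "small k (\<lambda>t. W (r + t *\<^sub>R u) - (W (r + t *\<^sub>R u) - jet k W r (r + t *\<^sub>R u)))"
        by (rule small_diff[OF sw taylor_small[OF sW r]])
      then have "small k (\<lambda>t. \<Sum>m\<le>k. t^m *\<^sub>R (inverse (fact m) *\<^sub>R Dm m W r u))"
        by (simp add: jet_line2)
      then have "\<forall>m\<le>k. inverse (fact m) *\<^sub>R Dm m W r u = 0" by (rule small_unique)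
      then show "Dm m W r u = 0" using m by simp
    qed
    then show ?thesis using jet_zero_iff by blast
  qed
  assume z: "jet k V r = (\<lambda>_. 0)"
  have zW: "jet k W r = (\<lambda>_. 0)" by (rule J1[OF z])
  have cV: "\<forall>u. \<forall>m\<le>k. Dm m V r u = 0" using z jet_zero_iff by blast
  have cW: "\<forall>u. \<forall>m\<le>k. Dm m W r u = 0" using zW jet_zero_iff by blast
  define u where "u = x - r"
  define a where "a = inverse (fact (Suc k)) *\<^sub>R Dm (Suc k) V r u"
  define b where "b = inverse (fact (Suc k)) *\<^sub>R Dm (Suc k) W r u"
  have jV: "jet (Suc k) V r (r + t *\<^sub>R u) = t^(Suc k) *\<^sub>R a" for t
    unfolding jet_line2 a_def using cV by simp
  have jW: "jet (Suc k) W r (r + t *\<^sub>R u) = t^(Suc k) *\<^sub>R b" for t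
    unfolding jet_line2 b_def using cW by simp
  have sv: "small (Suc k) (\<lambda>t. V (r + t *\<^sub>R u) - t^(Suc k) *\<^sub>R a)"
    using taylor_small[OF sV r, of "Suc k" u] unfolding jV .
  have sw: "small (Suc k) (\<lambda>t. W (r + t *\<^sub>R u) - t^(Suc k) *\<^sub>R b)"
    using taylor_small[OF sW r, of "Suc k" u] unfolding jW .
  have sw2: "small (Suc k) (\<lambda>t. W (r + t *\<^sub>R u) - t^(Suc k) *\<^sub>R L r a)"
  proof -
    have t1: "((\<lambda>t. L (r + t *\<^sub>R u) ((1 / t^(Suc k)) *\<^sub>R (V (r + t *\<^sub>R u) - t^(Suc k) *\<^sub>R a))) \<longlongrightarrow> L r 0) (at 0)"
      by (rule lin_tendsto[OF S r lin cont]) (use sv in \<open>simp add: small_def\<close>)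
    have t2: "((\<lambda>t. L (r + t *\<^sub>R u) a - L r a) \<longlongrightarrow> L r a - L r a) (at 0)"
      by (intro tendsto_diff lin_tendsto[OF S r lin cont] tendsto_const)
    have l0: "L r 0 = 0" using lin r linear_0 by blast
    have ev: "\<forall>\<^sub>F t in at (0::real). L (r + t *\<^sub>R u) ((1 / t^(Suc k)) *\<^sub>R (V (r + t *\<^sub>R u) - t^(Suc k) *\<^sub>R a)) + (L (r + t *\<^sub>R u) a - L r a)
        = (1 / t^(Suc k)) *\<^sub>R (W (r + t *\<^sub>R u) - t^(Suc k) *\<^sub>R L r a)"
    proof -
      have "\<forall>\<^sub>F t in at (0::real). t \<noteq> 0" by (simp add: eventually_at_filter)
      with ev_line[OF S r, of u] show ?thesis
      proof eventually_elim
        case (elim t)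
        have lp: "linear (L (r + t *\<^sub>R u))" using lin elim(1) by blast
        have "L (r + t *\<^sub>R u) ((1 / t^(Suc k)) *\<^sub>R (V (r + t *\<^sub>R u) - t^(Suc k) *\<^sub>R a))
            = (1 / t^(Suc k)) *\<^sub>R W (r + t *\<^sub>R u) - L (r + t *\<^sub>R u) a"
          using elim rel by (simp add: linear_scale[OF lp] linear_diff[OF lp] scaleR_diff_right)
        then show ?case using elim by (simp add: scaleR_diff_right)
      qed
    qed
    have "((\<lambda>t. L (r + t *\<^sub>R u) ((1 / t^(Suc k)) *\<^sub>R (V (r + t *\<^sub>R u) - t^(Suc k) *\<^sub>R a)) + (L (r + t *\<^sub>R u) a - L r a)) \<longlongrightarrow> 0) (at 0)"
      using tendsto_add[OF t1 t2] l0 by simp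
    then show ?thesis unfolding small_def using ev by (rule Lim_transform_eventually)
  qed
  have "small (Suc k) (\<lambda>t. (W (r + t *\<^sub>R u) - t^(Suc k) *\<^sub>R L r a) - (W (r + t *\<^sub>R u) - t^(Suc k) *\<^sub>R b))"
    by (rule small_diff[OF sw2 sw])
  then have "small (Suc k) (\<lambda>t. t^(Suc k) *\<^sub>R (b - L r a))" by (simp add: algebra_simps)
  then have "b - L r a = 0" by (rule small_single)
  moreover have "x = r + 1 *\<^sub>R u" unfolding u_def by simp
  ultimately show "jet (Suc k) W r x = L r (jet (Suc k) V r x)"
    using jV[of 1] jW[of 1] by simp
qed

lemma isolated_zero_cong:
  assumes "\<forall>x. P x = 0 \<longleftrightarrow> Q x = 0" shows "isolated_zero P r \<longleftrightarrow> isolated_zero Q r"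
  using assms unfolding isolated_zero_def by simp

lemma jet0_const: "jet 0 V r = (\<lambda>x. V r)"
  by (simp add: fun_eq_iff jet_Dm Dm_0)

lemma not_iso_const: "\<not> isolated_zero (\<lambda>x::real^'n::finite. c) r"
proof
  assume "isolated_zero (\<lambda>x. c) r"
  then obtain e where e: "e > 0" "\<forall>x. 0 < dist x r \<and> dist x r < e \<longrightarrow> c \<noteq> 0" and c: "c = 0"
    unfolding isolated_zero_def by blast
  define y where "y = r + (e/2) *\<^sub>R axis (undefined::'n) (1::real)"
  have d: "dist y r = e / 2" unfolding y_def using e(1) by (simp add: dist_norm norm_axis_1)
  have "0 < dist y r" using d e(1) by linarith
  moreover have "dist y r < e" using d e(1) by linarith
  ultimately have "0 < dist y r \<and> dist y r < e" by blast
  then show False using e(2) c by blast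
qed

theorem lemma3p3:
  fixes U V W :: "(real^2) set"
    and f xi :: "real^2 \<Rightarrow> real^3"
    and h :: "real^2 \<Rightarrow> real^2 \<Rightarrow> real^2 \<Rightarrow> real"
    and B :: "real^2 \<Rightarrow> real^2 \<Rightarrow> real^2"
    and X1 X2 Y1 Y2 :: "real^2 \<Rightarrow> real^2"
    and r0 :: "real^2"
  assumes f_smooth: "smooth_on U f"
    and xi_smooth: "smooth_on U xi"
    and immersion: "\<forall>p\<in>U. inj (dmap f p)"
    and transversal: "\<forall>p\<in>U. xi p \<notin> range (dmap f p)"
    and h_def: "\<forall>p\<in>U. \<forall>v w. d2map f p v w - h p v w *\<^sub>R xi p \<in> range (dmap f p)"
    and equiaffine: "\<forall>p\<in>U. \<forall>v. dmap xi p v = - dmap f p (B p v)"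
    and h_posdef: "\<forall>p\<in>U. \<forall>v. v \<noteq> 0 \<longrightarrow> h p v v > 0"
    and r0_in: "r0 \<in> U"
    and r0_umbilic: "umbilical B r0"
    and r0_isolated: "\<exists>e>0. \<forall>p\<in>U. 0 < dist p r0 \<and> dist p r0 < e \<longrightarrow> \<not> umbilical B p"
    and V_nbhd: "r0 \<in> V" "V \<subseteq> U"
    and X_smooth: "smooth_on V X1" "smooth_on V X2"
    and X_on: "h_orthonormal_frame h V X1 X2"
    and W_nbhd: "r0 \<in> W" "W \<subseteq> U"
    and Y_smooth: "smooth_on W Y1" "smooth_on W Y2"
    and Y_on: "h_orthonormal_frame h W Y1 Y2"
  shows "jet_order (calB h B X1 X2) r0 = jet_order (calB h B Y1 Y2) r0
       \<and> (\<forall>k. semi_homogeneous k (calB h B X1 X2) r0 \<longleftrightarrow> semi_homogeneous k (calB h B Y1 Y2) r0)"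
proof -
  interpret surf U f xi h B
    using f_smooth xi_smooth immersion transversal h_def equiaffine h_posdef by unfold_locales
  define S where "S = V \<inter> W"
  have oV: "open V" using X_smooth(1) smooth_open by blast
  have oW: "open W" using Y_smooth(1) smooth_open by blast
  have oS: "open S" unfolding S_def using oV oW by blast
  have rS: "r0 \<in> S" unfolding S_def using V_nbhd W_nbhd by blast
  have SU: "S \<subseteq> U" unfolding S_def using V_nbhd W_nbhd by blast
  have sX1: "smooth_on S X1" and sX2: "smooth_on S X2"
    using smooth_mono[OF X_smooth(1) oS] smooth_mono[OF X_smooth(2) oS] unfolding S_def by auto
  have sY1: "smooth_on S Y1" and sY2: "smooth_on S Y2"
    using smooth_mono[OF Y_smooth(1) oS] smooth_mono[OF Y_smooth(2) oS] unfolding S_def by auto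
  have XS: "h_orthonormal_frame h S X1 X2" using X_on unfolding h_orthonormal_frame_def S_def by blast
  have YS: "h_orthonormal_frame h S Y1 Y2" using Y_on unfolding h_orthonormal_frame_def S_def by blast
  let ?P = "calB h B X1 X2" and ?Q = "calB h B Y1 Y2"
  have sP: "smooth_on S ?P" by (rule sm_calB[OF SU sX1 sX2])
  have sQ: "smooth_on S ?Q" by (rule sm_calB[OF SU sY1 sY2])
  obtain L where L1: "\<forall>p\<in>S. linear (L p)" and L2: "\<forall>j. isCont (\<lambda>p. L p (axis j 1)) r0"
      and L3: "\<forall>p\<in>S. ?Q p = L p (?P p)" and L4: "\<forall>v. L r0 v = 0 \<longrightarrow> v = 0"
    using frames_rel[OF SU sX1 sX2 XS sY1 sY2 YS rS] by blast
  obtain L' where L'1: "\<forall>p\<in>S. linear (L' p)" and L'2: "\<forall>j. isCont (\<lambda>p. L' p (axis j 1)) r0"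
      and L'3: "\<forall>p\<in>S. ?P p = L' p (?Q p)"
    using frames_rel[OF SU sY1 sY2 YS sX1 sX2 XS rS] by blast
  have PQ: "jet k ?P r0 = (\<lambda>_. 0) \<Longrightarrow> jet k ?Q r0 = (\<lambda>_. 0)" for k
    by (rule jet_transfer1[OF sP sQ rS L1 L2 L3])
  have QP: "jet k ?Q r0 = (\<lambda>_. 0) \<Longrightarrow> jet k ?P r0 = (\<lambda>_. 0)" for k
    by (rule jet_transfer1[OF sQ sP rS L'1 L'2 L'3])
  have eqz: "jet k ?P r0 = (\<lambda>_. 0) \<longleftrightarrow> jet k ?Q r0 = (\<lambda>_. 0)" for k
    using PQ QP by blast
  have ord: "jet_order ?P r0 = jet_order ?Q r0"
    unfolding jet_order_def using eqz by simp
  have semi: "semi_homogeneous k ?P r0 \<longleftrightarrow> semi_homogeneous k ?Q r0" for k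
  proof (cases k)
    case 0
    show ?thesis unfolding semi_homogeneous_def 0 jet0_const
      using not_iso_const[of "calB h B X1 X2 r0" r0] not_iso_const[of "calB h B Y1 Y2 r0" r0] by simp
  next
    case (Suc k')
    show ?thesis
    proof (cases "jet k' ?P r0 = (\<lambda>_. 0)")
      case True
      have jQ: "jet k' ?Q r0 = (\<lambda>_. 0)" using PQ True by blast
      have e: "jet (Suc k') ?Q r0 x = L r0 (jet (Suc k') ?P r0 x)" for x
        by (rule jet_transfer2[OF sP sQ rS L1 L2 L3 True])
      have l0: "L r0 0 = 0" using L1 rS linear_0 by blast
      have "\<forall>x. jet (Suc k') ?P r0 x = 0 \<longleftrightarrow> jet (Suc k') ?Q r0 x = 0"
        using e L4 l0 by metis
      then show ?thesis unfolding semi_homogeneous_def Suc using True jQ isolated_zero_cong by simp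
    next
      case False
      then have "jet k' ?Q r0 \<noteq> (\<lambda>_. 0)" using eqz by blast
      then show ?thesis unfolding semi_homogeneous_def Suc using False by simp
    qed
  qed
  show ?thesis using ord semi by blast
qed

end
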